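(* Consider a family of metrics on real projective 3-space $RP^3$ (with size tending to infinity), and qudits of dimension $d\ge2$ placed equally spaced along a projective line $RP^1\subset RP^3$. The shift QCA on this $RP^1$ (mapping each operator at a site to the corresponding operator at the next site along the circle $RP^1$) cannot be realized by a finite depth quantum circuit.
   Context: A finite depth quantum circuit (fdqc) is a unitary obtained as the product of a bounded number of layers, each layer a product of unitaries (gates) on disjoint sets of bounded diameter, with the bounds on depth and gate diameter uniform along the family; it realizes a QCA by conjugation $O\mapsto U^\dagger O U$. A QCA is a $*$-automorphism of the operator algebra of the tensor product of the local Hilbert spaces which maps operators supported at a point to operators supported within a bounded distance of that point. *)

theory Defs
  imports "HOL-Analysis.Analysis"
begin

text \<open>A point of RP^3 is represented by a unit vector of R^4 (up to sign).
The round (Fubini--Study) metric on RP^3 = S^3/{+-1}, scaled by the size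
parameter L, gives the distance  L * arccos |x . y|.\<close>

definition rp3_dist :: "real \<Rightarrow> real^4 \<Rightarrow> real^4 \<Rightarrow> real" where
  "rp3_dist L x y = L * arccos \<bar>x \<bullet> y\<bar>"

text \<open>The projective line RP^1 = P(span(e1,e2)) inside RP^3; the k-th of N
equally spaced sites along it.\<close>

definition site :: "nat \<Rightarrow> nat \<Rightarrow> real^4" where
  "site N k = vector [cos (pi * real k / real N), sin (pi * real k / real N), 0, 0]"

text \<open>Basis configurations of the Hilbert space (C^d)^{\<otimes> N}: functions
assigning a level < d to each site < N (and 0 elsewhere).  Operators are
matrices indexed by configurations; only their entries on configurations matter.\<close>

definition cfgs :: "nat \<Rightarrow> nat \<Rightarrow> (nat \<Rightarrow> nat) set" where
  "cfgs N d = {c. (\<forall>i<N. c i < d) \<and> (\<forall>i\<ge>N. c i = 0)}"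

type_synonym op = "(nat \<Rightarrow> nat) \<Rightarrow> (nat \<Rightarrow> nat) \<Rightarrow> complex"

definition op_mul :: "nat \<Rightarrow> nat \<Rightarrow> op \<Rightarrow> op \<Rightarrow> op" where
  "op_mul N d A B = (\<lambda>c c'. \<Sum>b\<in>cfgs N d. A c b * B b c')"

definition op_id :: op where
  "op_id = (\<lambda>c c'. if c = c' then 1 else 0)"

definition op_adj :: "op \<Rightarrow> op" where
  "op_adj A = (\<lambda>c c'. cnj (A c' c))"

definition op_eq :: "nat \<Rightarrow> nat \<Rightarrow> op \<Rightarrow> op \<Rightarrow> bool" where
  "op_eq N d A B \<longleftrightarrow> (\<forall>c\<in>cfgs N d. \<forall>c'\<in>cfgs N d. A c c' = B c c')"

definition op_unitary :: "nat \<Rightarrow> nat \<Rightarrow> op \<Rightarrow> bool" where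
  "op_unitary N d U \<longleftrightarrow>
     op_eq N d (op_mul N d U (op_adj U)) op_id \<and> op_eq N d (op_mul N d (op_adj U) U) op_id"

text \<open>X is supported on the set of sites S: X = A tensor id on the complement of S.\<close>

definition supported_on :: "nat \<Rightarrow> nat \<Rightarrow> nat set \<Rightarrow> op \<Rightarrow> bool" where
  "supported_on N d S X \<longleftrightarrow> (\<exists>A. \<forall>c\<in>cfgs N d. \<forall>c'\<in>cfgs N d.
     X c c' = (if (\<forall>i\<in>{..<N} - S. c i = c' i)
               then A (\<lambda>i. if i \<in> S then c i else 0) (\<lambda>i. if i \<in> S then c' i else 0)
               else 0))"

definition shift_site :: "nat \<Rightarrow> nat \<Rightarrow> nat" where
  "shift_site N i = (if i < N then (i + 1) mod N else i)"

text \<open>The shift automorphism: an operator acting at site i is mapped to the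
same operator acting at site i+1 (mod N).\<close>

definition shift_qca :: "nat \<Rightarrow> op \<Rightarrow> op" where
  "shift_qca N X = (\<lambda>c c'. X (c \<circ> shift_site N) (c' \<circ> shift_site N))"

definition op_prod :: "nat \<Rightarrow> nat \<Rightarrow> op list \<Rightarrow> op" where
  "op_prod N d Us = foldr (op_mul N d) Us op_id"

definition valid_gate :: "real \<Rightarrow> nat \<Rightarrow> nat \<Rightarrow> real \<Rightarrow> nat set \<times> op \<Rightarrow> bool" where
  "valid_gate L N d R g \<longleftrightarrow>
     fst g \<subseteq> {..<N} \<and> op_unitary N d (snd g) \<and> supported_on N d (fst g) (snd g) \<and>
     (\<forall>i\<in>fst g. \<forall>j\<in>fst g. rp3_dist L (site N i) (site N j) \<le> R)"

definition valid_layer :: "real \<Rightarrow> nat \<Rightarrow> nat \<Rightarrow> real \<Rightarrow> (nat set \<times> op) list \<Rightarrow> bool" where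
  "valid_layer L N d R lay \<longleftrightarrow>
     (\<forall>g\<in>set lay. valid_gate L N d R g) \<and>
     (\<forall>a<length lay. \<forall>b<length lay. a \<noteq> b \<longrightarrow> fst (lay ! a) \<inter> fst (lay ! b) = {})"

definition circuit_unitary :: "nat \<Rightarrow> nat \<Rightarrow> (nat set \<times> op) list list \<Rightarrow> op" where
  "circuit_unitary N d layers = op_prod N d (map (\<lambda>lay. op_prod N d (map snd lay)) layers)"

definition fdqc_realizes ::
  "real \<Rightarrow> nat \<Rightarrow> nat \<Rightarrow> nat \<Rightarrow> real \<Rightarrow> (op \<Rightarrow> op) \<Rightarrow> bool" where
  "fdqc_realizes L N d D R alpha \<longleftrightarrow>
     (\<exists>layers. length layers \<le> D \<and> (\<forall>lay\<in>set layers. valid_layer L N d R lay) \<and>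
        (\<forall>X. op_eq N d (alpha X)
               (op_mul N d (op_adj (circuit_unitary N d layers))
                  (op_mul N d X (circuit_unitary N d layers)))))"

end

theory Submission
  imports Defs
begin


definition ndist :: "nat \<Rightarrow> nat \<Rightarrow> nat" where
  "ndist i j = (if i \<le> j then j - i else i - j)"

lemma site_inner: "site N i \<bullet> site N j = cos (pi * real i / real N - pi * real j / real N)"
  unfolding site_def inner_vec_def sum_4 vector_def by (simp add: cos_diff)

lemma arccos_abs_cos:
  assumes "k \<le> N" "N > 0"
  shows "arccos \<bar>cos (pi * real k / real N)\<bar> = pi * real (min k (N - k)) / real N"
proof (cases "2 * k \<le> N")
  case True
  have "pi * real k / real N \<le> pi / 2"
    using True assms by (simp add: field_simps)
  moreover have "0 \<le> pi * real k / real N" by simp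
  ultimately have "cos (pi * real k / real N) \<ge> 0" using pi_gt_zero by (intro cos_ge_zero; linarith)
  moreover have "arccos (cos (pi * real k / real N)) = pi * real k / real N"
    using \<open>pi * real k / real N \<le> pi / 2\<close> pi_gt_zero by (intro arccos_cos; simp; linarith)
  ultimately show ?thesis using True by simp
next
  case False
  have e: "pi * real (N - k) / real N = pi - pi * real k / real N"
    using assms by (simp add: of_nat_diff field_simps)
  have "pi * real (N - k) / real N \<le> pi / 2"
    using False assms by (simp add: of_nat_diff field_simps)
  moreover have "0 \<le> pi * real (N - k) / real N" by simp
  ultimately have c: "cos (pi * real (N-k) / real N) \<ge> 0" using pi_gt_zero by (intro cos_ge_zero; linarith)
  have "cos (pi * real (N-k) / real N) = - cos (pi * real k / real N)"
    unfolding e by simp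
  hence "\<bar>cos (pi * real k / real N)\<bar> = cos (pi * real (N-k) / real N)" using c by linarith
  moreover have "arccos (cos (pi * real (N-k) / real N)) = pi * real (N-k) / real N"
    using \<open>pi * real (N-k) / real N \<le> pi / 2\<close> pi_gt_zero by (intro arccos_cos; simp; linarith)
  ultimately show ?thesis using False by simp
qed

lemma rp3_dist_site:
  assumes "i < N" "j < N"
  shows "rp3_dist L (site N i) (site N j) = L * (pi * real (min (ndist i j) (N - ndist i j)) / real N)"
proof -
  have N: "N > 0" using assms by simp
  have "\<bar>cos (pi * real i / real N - pi * real j / real N)\<bar> = \<bar>cos (pi * real (ndist i j) / real N)\<bar>"
  proof (cases "i \<le> j")
    case True
    have "pi * real i / real N - pi * real j / real N = - (pi * real (ndist i j) / real N)"
      using True by (simp add: ndist_def of_nat_diff diff_divide_distrib right_diff_distrib)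
    then show ?thesis by (simp only: cos_minus)
  next
    case False
    have "pi * real i / real N - pi * real j / real N = (pi * real (ndist i j) / real N)"
      using False by (simp add: ndist_def of_nat_diff diff_divide_distrib right_diff_distrib)
    then show ?thesis by simp
  qed
  moreover have "ndist i j \<le> N" using assms by (auto simp add: ndist_def)
  ultimately show ?thesis
    unfolding rp3_dist_def site_inner using arccos_abs_cos[OF _ N] by simp
qed



definition cf :: "nat \<Rightarrow> nat set \<Rightarrow> (nat \<Rightarrow> nat) set" where
  "cf d S = {c. (\<forall>i\<in>S. c i < d) \<and> (\<forall>i. i \<notin> S \<longrightarrow> c i = 0)}"

definition rs :: "nat set \<Rightarrow> (nat \<Rightarrow> nat) \<Rightarrow> (nat \<Rightarrow> nat)" where
  "rs S c = (\<lambda>i. if i \<in> S then c i else 0)"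

definition mrg :: "nat set \<Rightarrow> (nat \<Rightarrow> nat) \<Rightarrow> (nat \<Rightarrow> nat) \<Rightarrow> (nat \<Rightarrow> nat)" where
  "mrg S s t = (\<lambda>i. if i \<in> S then s i else t i)"

definition agree_off :: "nat \<Rightarrow> nat set \<Rightarrow> (nat \<Rightarrow> nat) \<Rightarrow> (nat \<Rightarrow> nat) \<Rightarrow> bool" where
  "agree_off N S a b \<longleftrightarrow> (\<forall>i\<in>{..<N} - S. a i = b i)"

lemma cfgs_cf: "cfgs N d = cf d {..<N}"
  unfolding cfgs_def cf_def by auto

lemma cf_empty: "cf d {} = {\<lambda>_. 0}"
  unfolding cf_def by auto

lemma cf_insert:
  assumes "a \<notin> S"
  shows "cf d (insert a S) = (\<lambda>(v, c). c(a := v)) ` ({..<d} \<times> cf d S)"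
proof (intro set_eqI iffI)
  fix c assume c: "c \<in> cf d (insert a S)"
  have "c = (\<lambda>(v, c). c(a := v)) (c a, c(a := 0))" by auto
  moreover have "(c a, c(a := 0)) \<in> {..<d} \<times> cf d S" using c assms unfolding cf_def by auto
  ultimately show "c \<in> (\<lambda>(v, c). c(a := v)) ` ({..<d} \<times> cf d S)" by blast
next
  fix c assume "c \<in> (\<lambda>(v, c). c(a := v)) ` ({..<d} \<times> cf d S)"
  then show "c \<in> cf d (insert a S)" unfolding cf_def by auto
qed

lemma finite_card_cf:
  assumes "finite S"
  shows "finite (cf d S) \<and> card (cf d S) = d ^ card S"
  using assms
proof (induction S rule: finite_induct)
  case empty
  then show ?case by (simp add: cf_empty)
next
  case (insert a S)
  have inj: "inj_on (\<lambda>(v, c). c(a := v)) ({..<d} \<times> cf d S)"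
  proof (rule inj_onI, clarify)
    fix v c v' c' assume h: "v < d" "c \<in> cf d S" "v' < d" "c' \<in> cf d S" "c(a := v) = c'(a := v')"
    have "v = v'" using fun_cong[OF h(5), of a] by simp
    moreover have "c = c'"
    proof
      fix i show "c i = c' i"
      proof (cases "i = a")
        case True then show ?thesis using h insert.hyps(2) unfolding cf_def by auto
      next
        case False then show ?thesis using fun_cong[OF h(5), of i] by simp
      qed
    qed
    ultimately show "v = v' \<and> c = c'" by simp
  qed
  show ?case
    unfolding cf_insert[OF insert.hyps(2)]
    using insert card_image[OF inj] by (simp add: card_cartesian_product)
qed

lemma finite_cf: "finite S \<Longrightarrow> finite (cf d S)"
  using finite_card_cf by blast

lemma card_cf: "finite S \<Longrightarrow> card (cf d S) = d ^ card S"
  using finite_card_cf by blast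

lemma finite_cfgs: "finite (cfgs N d)"
  unfolding cfgs_cf by (simp add: finite_cf)

lemma split_bij:
  assumes "S \<subseteq> U"
  shows "bij_betw (\<lambda>(s, t). mrg S s t) (cf d S \<times> cf d (U - S)) (cf d U)"
proof (rule bij_betw_byWitness[where f' = "\<lambda>e. (rs S e, rs (U - S) e)"])
  show "\<forall>a\<in>cf d S \<times> cf d (U - S). (\<lambda>e. (rs S e, rs (U - S) e)) ((\<lambda>(s, t). mrg S s t) a) = a"
    unfolding cf_def rs_def mrg_def by (auto intro!: ext)
  show "\<forall>a'\<in>cf d U. (\<lambda>(s, t). mrg S s t) (rs S a', rs (U - S) a') = a'"
    unfolding cf_def rs_def mrg_def by (auto intro!: ext)
  show "(\<lambda>(s, t). mrg S s t) ` (cf d S \<times> cf d (U - S)) \<subseteq> cf d U"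
    using assms unfolding cf_def rs_def mrg_def by auto
  show "(\<lambda>e. (rs S e, rs (U - S) e)) ` cf d U \<subseteq> cf d S \<times> cf d (U - S)"
    using assms unfolding cf_def rs_def mrg_def by auto
qed

lemma split_sum:
  assumes "S \<subseteq> {..<N}"
  shows "(\<Sum>e\<in>cfgs N d. f e) = (\<Sum>s\<in>cf d S. \<Sum>t\<in>cf d ({..<N} - S). f (mrg S s t))"
proof -
  have "(\<Sum>e\<in>cfgs N d. f e) = (\<Sum>p\<in>cf d S \<times> cf d ({..<N} - S). f ((\<lambda>(s, t). mrg S s t) p))"
    unfolding cfgs_cf using sum.reindex_bij_betw[OF split_bij[OF assms], of f d] by simp
  also have "\<dots> = (\<Sum>s\<in>cf d S. \<Sum>t\<in>cf d ({..<N} - S). f (mrg S s t))"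
    by (simp add: sum.cartesian_product case_prod_unfold)
  finally show ?thesis .
qed

lemma collapse_bij:
  assumes "S \<subseteq> {..<N}" "a \<in> cfgs N d"
  shows "bij_betw (\<lambda>s. mrg S s a) (cf d S) {e \<in> cfgs N d. agree_off N S a e}"
proof (rule bij_betw_byWitness[where f' = "rs S"])
  show "\<forall>s\<in>cf d S. rs S (mrg S s a) = s"
    unfolding cf_def rs_def mrg_def by (auto intro!: ext)
  show "\<forall>e\<in>{e \<in> cfgs N d. agree_off N S a e}. mrg S (rs S e) a = e"
    using assms unfolding cfgs_def agree_off_def rs_def mrg_def
    apply (auto intro!: ext) by (metis Diff_iff lessThan_iff not_less)
  show "(\<lambda>s. mrg S s a) ` cf d S \<subseteq> {e \<in> cfgs N d. agree_off N S a e}"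
    using assms unfolding cfgs_def cf_def agree_off_def mrg_def by auto
  show "rs S ` {e \<in> cfgs N d. agree_off N S a e} \<subseteq> cf d S"
    using assms unfolding cfgs_def cf_def agree_off_def rs_def by auto
qed

lemma collapse_sum:
  assumes "S \<subseteq> {..<N}" "a \<in> cfgs N d"
  shows "(\<Sum>e\<in>cfgs N d. if agree_off N S a e then h e else 0) = (\<Sum>s\<in>cf d S. h (mrg S s a))"
proof -
  have "(\<Sum>e\<in>cfgs N d. if agree_off N S a e then h e else 0) = (\<Sum>e\<in>{e \<in> cfgs N d. agree_off N S a e}. h e)"
    by (simp add: sum.inter_filter finite_cfgs)
  also have "\<dots> = (\<Sum>s\<in>cf d S. h (mrg S s a))"
    using sum.reindex_bij_betw[OF collapse_bij[OF assms], of h] by simp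
  finally show ?thesis .
qed

lemma sum_single:
  assumes "finite A" "e0 \<in> A" "\<And>e. e \<in> A \<Longrightarrow> e \<noteq> e0 \<Longrightarrow> f e = 0"
  shows "sum f A = f e0"
proof -
  have "sum f A = sum f {e0}"
    using assms by (intro sum.mono_neutral_right) auto
  then show ?thesis by simp
qed

section \<open>Basic operator algebra\<close>

lemma op_eq_refl: "op_eq N d A A" unfolding op_eq_def by simp
lemma op_eq_sym: "op_eq N d A B \<Longrightarrow> op_eq N d B A" unfolding op_eq_def by simp
lemma op_eq_trans[trans]: "op_eq N d A B \<Longrightarrow> op_eq N d B C \<Longrightarrow> op_eq N d A C"
  unfolding op_eq_def by simp
lemma eq_op_eq_trans[trans]: "A = B \<Longrightarrow> op_eq N d B C \<Longrightarrow> op_eq N d A C" by simp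
lemma op_eq_eq_trans[trans]: "op_eq N d A B \<Longrightarrow> B = C \<Longrightarrow> op_eq N d A C" by simp

lemma mul_assoc: "op_mul N d (op_mul N d A B) C = op_mul N d A (op_mul N d B C)"
  unfolding op_mul_def
  by (auto intro!: ext simp: sum_distrib_left sum_distrib_right mult.assoc intro: sum.swap)

lemma adj_mul: "op_adj (op_mul N d A B) = op_mul N d (op_adj B) (op_adj A)"
  unfolding op_mul_def op_adj_def by (auto intro!: ext simp: mult.commute)

lemma adj_adj: "op_adj (op_adj A) = A" unfolding op_adj_def by simp

lemma adj_id: "op_adj op_id = op_id" unfolding op_adj_def op_id_def by (auto intro!: ext)

lemma mul_cong: "op_eq N d A A' \<Longrightarrow> op_eq N d B B' \<Longrightarrow> op_eq N d (op_mul N d A B) (op_mul N d A' B')"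
  unfolding op_eq_def op_mul_def by (auto intro!: sum.cong)

lemma adj_cong: "op_eq N d A A' \<Longrightarrow> op_eq N d (op_adj A) (op_adj A')"
  unfolding op_eq_def op_adj_def by auto

lemma mul_id_left: "op_eq N d (op_mul N d op_id A) A"
  unfolding op_eq_def op_mul_def op_id_def
proof clarify
  fix c c' assume "c \<in> cfgs N d"
  have "(\<Sum>b\<in>cfgs N d. (if c = b then 1 else 0) * A b c') = (\<Sum>b\<in>cfgs N d. if c = b then A b c' else 0)"
    by (intro sum.cong) auto
  then show "(\<Sum>b\<in>cfgs N d. (if c = b then 1 else 0) * A b c') = A c c'"
    using \<open>c \<in> cfgs N d\<close> by (simp add: finite_cfgs)
qed

lemma mul_id_right: "op_eq N d (op_mul N d A op_id) A"
  unfolding op_eq_def op_mul_def op_id_def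
proof clarify
  fix c c' assume "c' \<in> cfgs N d"
  have "(\<Sum>b\<in>cfgs N d. A c b * (if b = c' then 1 else 0)) = (\<Sum>b\<in>cfgs N d. if b = c' then A c b else 0)"
    by (intro sum.cong) auto
  then show "(\<Sum>b\<in>cfgs N d. A c b * (if b = c' then 1 else 0)) = A c c'"
    using \<open>c' \<in> cfgs N d\<close> by (simp add: finite_cfgs)
qed

definition conj :: "nat \<Rightarrow> nat \<Rightarrow> op \<Rightarrow> op \<Rightarrow> op" where
  "conj N d P x = op_mul N d (op_adj P) (op_mul N d x P)"

lemma conj_cong: "op_eq N d x x' \<Longrightarrow> op_eq N d (conj N d P x) (conj N d P x')"
  unfolding conj_def by (intro mul_cong op_eq_refl)

lemma conj_mul: "conj N d (op_mul N d A B) x = conj N d B (conj N d A x)"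
  unfolding conj_def adj_mul mul_assoc ..

lemma conj_id: "op_eq N d (conj N d op_id x) x"
proof -
  have "op_eq N d (conj N d op_id x) (op_mul N d op_id x)"
    unfolding conj_def adj_id by (intro mul_cong op_eq_refl mul_id_right)
  also have "op_eq N d \<dots> x" by (rule mul_id_left)
  finally show ?thesis .
qed

lemma unitary_mul:
  assumes "op_unitary N d A" "op_unitary N d B"
  shows "op_unitary N d (op_mul N d A B)"
proof -
  have "op_eq N d (op_mul N d (op_mul N d A B) (op_adj (op_mul N d A B)))
        (op_mul N d A (op_mul N d (op_mul N d B (op_adj B)) (op_adj A)))"
    unfolding adj_mul mul_assoc by (rule op_eq_refl)
  also have "op_eq N d \<dots> (op_mul N d A (op_mul N d op_id (op_adj A)))"
    using assms unfolding op_unitary_def by (intro mul_cong op_eq_refl) auto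
  also have "op_eq N d \<dots> (op_mul N d A (op_adj A))"
    by (intro mul_cong op_eq_refl mul_id_left)
  also have "op_eq N d \<dots> op_id" using assms unfolding op_unitary_def by auto
  finally have 1: "op_eq N d (op_mul N d (op_mul N d A B) (op_adj (op_mul N d A B))) op_id" .
  have "op_eq N d (op_mul N d (op_adj (op_mul N d A B)) (op_mul N d A B))
        (op_mul N d (op_adj B) (op_mul N d (op_mul N d (op_adj A) A) B))"
    unfolding adj_mul mul_assoc by (rule op_eq_refl)
  also have "op_eq N d \<dots> (op_mul N d (op_adj B) (op_mul N d op_id B))"
    using assms unfolding op_unitary_def by (intro mul_cong op_eq_refl) auto
  also have "op_eq N d \<dots> (op_mul N d (op_adj B) B)"
    by (intro mul_cong op_eq_refl mul_id_left)
  also have "op_eq N d \<dots> op_id" using assms unfolding op_unitary_def by auto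
  finally show ?thesis using 1 unfolding op_unitary_def by simp
qed

lemma unitary_id: "op_unitary N d op_id"
  unfolding op_unitary_def adj_id using mul_id_left by blast

lemma unitary_prod: "(\<forall>g\<in>set gs. op_unitary N d g) \<Longrightarrow> op_unitary N d (op_prod N d gs)"
  by (induction gs) (auto simp: op_prod_def unitary_id unitary_mul)



lemma supp_def':
  "supported_on N d S X \<longleftrightarrow> (\<exists>A. \<forall>c\<in>cfgs N d. \<forall>c'\<in>cfgs N d.
     X c c' = (if agree_off N S c c' then A (rs S c) (rs S c') else 0))"
  unfolding supported_on_def agree_off_def rs_def by simp

lemma suppE:
  assumes "supported_on N d S X"
  obtains A where "\<And>c c'. c \<in> cfgs N d \<Longrightarrow> c' \<in> cfgs N d \<Longrightarrow>
     X c c' = (if agree_off N S c c' then A (rs S c) (rs S c') else 0)"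
  using assms unfolding supp_def' by blast

lemma supp_cong: "op_eq N d X X' \<Longrightarrow> supported_on N d S X \<Longrightarrow> supported_on N d S X'"
  unfolding supp_def' op_eq_def by metis

lemma mrg_cfgs: "s \<in> cf d S \<Longrightarrow> S \<subseteq> {..<N} \<Longrightarrow> a \<in> cfgs N d \<Longrightarrow> mrg S s a \<in> cfgs N d"
  unfolding cf_def cfgs_def mrg_def by auto

lemma rs_mrg: "s \<in> cf d S \<Longrightarrow> rs S (mrg S s a) = s"
  unfolding cf_def rs_def mrg_def by (auto intro!: ext)

lemma agree_mrg: "agree_off N S (mrg S s a) b \<longleftrightarrow> agree_off N S a b"
  unfolding agree_off_def mrg_def by auto

lemma agree_sym: "agree_off N S a b \<longleftrightarrow> agree_off N S b a"
  unfolding agree_off_def by auto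

lemma agree_trans: "agree_off N S a b \<Longrightarrow> agree_off N S b c \<Longrightarrow> agree_off N S a c"
  unfolding agree_off_def by auto

lemma supp_mono:
  assumes "supported_on N d S X" "S \<subseteq> S'"
  shows "supported_on N d S' X"
proof -
  obtain A where A: "\<And>c c'. c \<in> cfgs N d \<Longrightarrow> c' \<in> cfgs N d \<Longrightarrow>
     X c c' = (if agree_off N S c c' then A (rs S c) (rs S c') else 0)" using suppE[OF assms(1)] by blast
  define A' where "A' = (\<lambda>s s'. if (\<forall>i\<in>S' - S. s i = s' i) then A (rs S s) (rs S s') else 0)"
  show ?thesis unfolding supp_def'
  proof (intro exI ballI)
    fix c c' assume c: "c \<in> cfgs N d" "c' \<in> cfgs N d"
    have r: "rs S (rs S' c) = rs S c" "rs S (rs S' c') = rs S c'"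
      using assms(2) unfolding rs_def by (auto intro!: ext)
    have "agree_off N S c c' \<longleftrightarrow> agree_off N S' c c' \<and> (\<forall>i\<in>S' - S. rs S' c i = rs S' c' i)"
    proof
      assume h: "agree_off N S c c'"
      show "agree_off N S' c c' \<and> (\<forall>i\<in>S' - S. rs S' c i = rs S' c' i)"
      proof
        show "agree_off N S' c c'" using h assms(2) unfolding agree_off_def by auto
        show "\<forall>i\<in>S' - S. rs S' c i = rs S' c' i"
        proof
          fix i assume i: "i \<in> S' - S"
          show "rs S' c i = rs S' c' i"
          proof (cases "i < N")
            case True then show ?thesis using h i unfolding agree_off_def rs_def by auto
          next
            case False then show ?thesis using c unfolding rs_def cfgs_def by auto
          qed
        qed
      qed
    next
      assume h: "agree_off N S' c c' \<and> (\<forall>i\<in>S' - S. rs S' c i = rs S' c' i)"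
      show "agree_off N S c c'" unfolding agree_off_def
      proof
        fix i assume i: "i \<in> {..<N} - S"
        show "c i = c' i"
        proof (cases "i \<in> S'")
          case True then show ?thesis using h i unfolding rs_def by auto
        next
          case False then show ?thesis using h i unfolding agree_off_def by auto
        qed
      qed
    qed
    then show "X c c' = (if agree_off N S' c c' then A' (rs S' c) (rs S' c') else 0)"
      unfolding A'_def A[OF c] r by auto
  qed
qed

lemma supp_mul:
  assumes "supported_on N d S X" "supported_on N d S Y" "S \<subseteq> {..<N}"
  shows "supported_on N d S (op_mul N d X Y)"
proof -
  obtain A where A: "\<And>c c'. c \<in> cfgs N d \<Longrightarrow> c' \<in> cfgs N d \<Longrightarrow>
     X c c' = (if agree_off N S c c' then A (rs S c) (rs S c') else 0)" using suppE[OF assms(1)] by blast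
  obtain B where B: "\<And>c c'. c \<in> cfgs N d \<Longrightarrow> c' \<in> cfgs N d \<Longrightarrow>
     Y c c' = (if agree_off N S c c' then B (rs S c) (rs S c') else 0)" using suppE[OF assms(2)] by blast
  show ?thesis unfolding supp_def'
  proof (intro exI ballI)
    fix c c' assume c: "c \<in> cfgs N d" "c' \<in> cfgs N d"
    have "op_mul N d X Y c c' = (\<Sum>e\<in>cfgs N d. if agree_off N S c e then A (rs S c) (rs S e) * Y e c' else 0)"
      unfolding op_mul_def using c by (intro sum.cong) (auto simp: A)
    also have "\<dots> = (\<Sum>u\<in>cf d S. A (rs S c) (rs S (mrg S u c)) * Y (mrg S u c) c')"
      by (rule collapse_sum[OF assms(3) c(1)])
    also have "\<dots> = (\<Sum>u\<in>cf d S. if agree_off N S c c' then A (rs S c) u * B u (rs S c') else 0)"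
      using c assms(3) by (intro sum.cong) (auto simp: B mrg_cfgs rs_mrg agree_mrg)
    also have "\<dots> = (if agree_off N S c c' then (\<lambda>s s'. \<Sum>u\<in>cf d S. A s u * B u s') (rs S c) (rs S c') else 0)"
      by simp
    finally show "op_mul N d X Y c c' = (if agree_off N S c c' then (\<lambda>s s'. \<Sum>u\<in>cf d S. A s u * B u s') (rs S c) (rs S c') else 0)" .
  qed
qed

lemma supp_adj:
  assumes "supported_on N d S X"
  shows "supported_on N d S (op_adj X)"
proof -
  obtain A where A: "\<And>c c'. c \<in> cfgs N d \<Longrightarrow> c' \<in> cfgs N d \<Longrightarrow>
     X c c' = (if agree_off N S c c' then A (rs S c) (rs S c') else 0)" using suppE[OF assms(1)] by blast
  show ?thesis unfolding supp_def'
    by (rule exI[of _ "\<lambda>s s'. cnj (A s' s)"]) (auto simp: op_adj_def A agree_sym)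
qed

lemma commute_disj:
  assumes "supported_on N d S X" "supported_on N d T G" "S \<inter> T = {}" "S \<subseteq> {..<N}" "T \<subseteq> {..<N}"
  shows "op_eq N d (op_mul N d X G) (op_mul N d G X)"
proof -
  obtain A where A: "\<And>c c'. c \<in> cfgs N d \<Longrightarrow> c' \<in> cfgs N d \<Longrightarrow>
     X c c' = (if agree_off N S c c' then A (rs S c) (rs S c') else 0)" using suppE[OF assms(1)] by blast
  obtain B where B: "\<And>c c'. c \<in> cfgs N d \<Longrightarrow> c' \<in> cfgs N d \<Longrightarrow>
     G c c' = (if agree_off N T c c' then B (rs T c) (rs T c') else 0)" using suppE[OF assms(2)] by blast
  show ?thesis unfolding op_eq_def
  proof (intro ballI)
    fix a b assume ab: "a \<in> cfgs N d" "b \<in> cfgs N d"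
    show "op_mul N d X G a b = op_mul N d G X a b"
    proof (cases "agree_off N (S \<union> T) a b")
      case False
      have 1: "op_mul N d X G a b = 0" unfolding op_mul_def
      proof (intro sum.neutral ballI)
        fix e assume e: "e \<in> cfgs N d"
        show "X a e * G e b = 0"
          using False unfolding A[OF ab(1) e] B[OF e ab(2)] agree_off_def by auto
      qed
      have 2: "op_mul N d G X a b = 0" unfolding op_mul_def
      proof (intro sum.neutral ballI)
        fix e assume e: "e \<in> cfgs N d"
        show "G a e * X e b = 0"
          using False unfolding B[OF ab(1) e] A[OF e ab(2)] agree_off_def by auto
      qed
      show ?thesis using 1 2 by simp
    next
      case True
      define e0 where "e0 = mrg S b a"
      define e1 where "e1 = mrg T b a"
      have e0: "e0 \<in> cfgs N d" "e1 \<in> cfgs N d" using ab unfolding e0_def e1_def cfgs_def mrg_def by auto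
      have "op_mul N d X G a b = X a e0 * G e0 b" unfolding op_mul_def
      proof (rule sum_single[OF finite_cfgs e0(1)])
        fix e assume e: "e \<in> cfgs N d" "e \<noteq> e0"
        have "\<not> (agree_off N S a e \<and> agree_off N T e b)"
        proof
          assume h: "agree_off N S a e \<and> agree_off N T e b"
          have "e = e0"
          proof
            fix i show "e i = e0 i"
            proof (cases "i < N")
              case True
              then show ?thesis
                using h assms(3) unfolding agree_off_def e0_def mrg_def by (cases "i \<in> S") auto
            next
              case False
              then show ?thesis using e(1) ab unfolding e0_def mrg_def cfgs_def by auto
            qed
          qed
          then show False using e by simp
        qed
        then show "X a e * G e b = 0" unfolding A[OF ab(1) e(1)] B[OF e(1) ab(2)] by auto
      qed
      also have "\<dots> = (A (rs S a) (rs S b)) * B (rs T a) (rs T b)"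
      proof -
        have "agree_off N S a e0" "agree_off N T e0 b" "rs S e0 = rs S b" "rs T e0 = rs T a"
          using True assms(3) unfolding agree_off_def e0_def mrg_def rs_def by (auto intro!: ext)
        then show ?thesis unfolding A[OF ab(1) e0(1)] B[OF e0(1) ab(2)] by simp
      qed
      also have "\<dots> = G a e1 * X e1 b"
      proof -
        have "agree_off N T a e1" "agree_off N S e1 b" "rs T e1 = rs T b" "rs S e1 = rs S a"
          using True assms(3) unfolding agree_off_def e1_def mrg_def rs_def by (auto intro!: ext)
        then show ?thesis unfolding B[OF ab(1) e0(2)] A[OF e0(2) ab(2)] by simp
      qed
      also have "\<dots> = op_mul N d G X a b" unfolding op_mul_def
      proof (rule sum_single[symmetric, OF finite_cfgs e0(2)])
        fix e assume e: "e \<in> cfgs N d" "e \<noteq> e1"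
        have "\<not> (agree_off N T a e \<and> agree_off N S e b)"
        proof
          assume h: "agree_off N T a e \<and> agree_off N S e b"
          have "e = e1"
          proof
            fix i show "e i = e1 i"
            proof (cases "i < N")
              case True
              then show ?thesis
                using h assms(3) unfolding agree_off_def e1_def mrg_def by (cases "i \<in> T") auto
            next
              case False
              then show ?thesis using e(1) ab unfolding e1_def mrg_def cfgs_def by auto
            qed
          qed
          then show False using e by simp
        qed
        then show "G a e * X e b = 0" unfolding B[OF ab(1) e(1)] A[OF e(1) ab(2)] by auto
      qed
      finally show ?thesis .
    qed
  qed
qed

lemma conj_disj:
  assumes "supported_on N d S X" "supported_on N d T G" "S \<inter> T = {}" "S \<subseteq> {..<N}" "T \<subseteq> {..<N}"
    "op_unitary N d G"
  shows "op_eq N d (conj N d G X) X"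
proof -
  have "op_eq N d (conj N d G X) (op_mul N d (op_adj G) (op_mul N d G X))"
    unfolding conj_def by (rule mul_cong[OF op_eq_refl commute_disj[OF assms(1-5)]])
  also have "op_eq N d \<dots> (op_mul N d op_id X)"
    unfolding mul_assoc[symmetric] using assms(6) unfolding op_unitary_def
    by (intro mul_cong op_eq_refl) auto
  also have "op_eq N d \<dots> X" by (rule mul_id_left)
  finally show ?thesis .
qed

lemma conj_supp:
  assumes "supported_on N d S X" "supported_on N d T G" "S \<subseteq> {..<N}" "T \<subseteq> {..<N}"
  shows "supported_on N d (S \<union> T) (conj N d G X)"
proof -
  have a: "supported_on N d (S \<union> T) X" "supported_on N d (S \<union> T) G"
    using assms by (auto intro: supp_mono)
  show ?thesis unfolding conj_def using assms(3,4)
    by (intro supp_mul supp_adj a) auto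
qed



definition conjL :: "nat \<Rightarrow> nat \<Rightarrow> op list \<Rightarrow> op \<Rightarrow> op" where
  "conjL N d gs x = foldl (\<lambda>x g. conj N d g x) x gs"

definition conjLL :: "nat \<Rightarrow> nat \<Rightarrow> (nat set \<times> op) list list \<Rightarrow> op \<Rightarrow> op" where
  "conjLL N d ls x = foldl (\<lambda>x lay. conjL N d (map snd lay) x) x ls"

lemma conjL_Nil[simp]: "conjL N d [] x = x" unfolding conjL_def by simp
lemma conjL_Cons[simp]: "conjL N d (g # gs) x = conjL N d gs (conj N d g x)" unfolding conjL_def by simp
lemma conjLL_Nil[simp]: "conjLL N d [] x = x" unfolding conjLL_def by simp
lemma conjLL_Cons[simp]: "conjLL N d (l # ls) x = conjLL N d ls (conjL N d (map snd l) x)"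
  unfolding conjLL_def by simp

lemma conjL_cong: "op_eq N d x x' \<Longrightarrow> op_eq N d (conjL N d gs x) (conjL N d gs x')"
  by (induction gs arbitrary: x x') (auto intro: conj_cong)

lemma conjLL_cong: "op_eq N d x x' \<Longrightarrow> op_eq N d (conjLL N d ls x) (conjLL N d ls x')"
  by (induction ls arbitrary: x x') (auto intro: conjL_cong)

lemma conjL_prod: "op_eq N d (conj N d (op_prod N d gs) x) (conjL N d gs x)"
proof (induction gs arbitrary: x)
  case Nil
  then show ?case by (simp add: op_prod_def conj_id)
next
  case (Cons g gs)
  have "conj N d (op_prod N d (g # gs)) x = conj N d (op_prod N d gs) (conj N d g x)"
    by (simp add: op_prod_def conj_mul)
  then show ?case using Cons.IH by simp
qed

lemma circ_conj: "op_eq N d (conj N d (circuit_unitary N d ls) x) (conjLL N d ls x)"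
proof (induction ls arbitrary: x)
  case Nil
  then show ?case by (simp add: circuit_unitary_def op_prod_def conj_id)
next
  case (Cons l ls)
  have e: "circuit_unitary N d (l # ls) = op_mul N d (op_prod N d (map snd l)) (circuit_unitary N d ls)"
    by (simp add: circuit_unitary_def op_prod_def)
  have "op_eq N d (conj N d (circuit_unitary N d (l # ls)) x)
      (conj N d (circuit_unitary N d ls) (conj N d (op_prod N d (map snd l)) x))"
    unfolding e conj_mul by (rule op_eq_refl)
  also have "op_eq N d \<dots> (conj N d (circuit_unitary N d ls) (conjL N d (map snd l) x))"
    by (intro conj_cong conjL_prod)
  also have "op_eq N d \<dots> (conjLL N d ls (conjL N d (map snd l) x))" by (rule Cons.IH)
  finally show ?case by simp
qed

definition GP :: "nat \<Rightarrow> nat \<Rightarrow> nat set \<times> op \<Rightarrow> bool" where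
  "GP N d g \<longleftrightarrow> fst g \<subseteq> {..<N} \<and> op_unitary N d (snd g) \<and> supported_on N d (fst g) (snd g)"

definition ldisj :: "(nat set \<times> op) list \<Rightarrow> bool" where
  "ldisj lay \<longleftrightarrow> (\<forall>a<length lay. \<forall>b<length lay. a \<noteq> b \<longrightarrow> fst (lay ! a) \<inter> fst (lay ! b) = {})"

lemma ldisj_Cons: "ldisj (g # gs) \<Longrightarrow> ldisj gs \<and> (\<forall>h\<in>set gs. fst g \<inter> fst h = {})"
proof -
  assume h: "ldisj (g # gs)"
  have 1: "ldisj gs" unfolding ldisj_def
  proof (intro allI impI)
    fix a b assume "a < length gs" "b < length gs" "a \<noteq> b"
    then show "fst (gs ! a) \<inter> fst (gs ! b) = {}"
      using h[unfolded ldisj_def, rule_format, of "Suc a" "Suc b"] by simp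
  qed
  have 2: "\<forall>h\<in>set gs. fst g \<inter> fst h = {}"
  proof
    fix k assume "k \<in> set gs"
    then obtain b where "b < length gs" "gs ! b = k" by (auto simp: in_set_conv_nth)
    then show "fst g \<inter> fst k = {}"
      using h[unfolded ldisj_def, rule_format, of 0 "Suc b"] by simp
  qed
  show ?thesis using 1 2 by simp
qed

lemma layer_supp:
  assumes "\<forall>g\<in>set lay. GP N d g" "ldisj lay" "supported_on N d (S \<union> E) x" "S \<union> E \<subseteq> {..<N}"
    "\<forall>g\<in>set lay. fst g \<inter> E = {}" "S \<union> E \<subseteq> F"
    "\<forall>g\<in>set lay. P g \<longrightarrow> fst g \<inter> S \<noteq> {} \<longrightarrow> fst g \<subseteq> F"
  shows "supported_on N d F (conjL N d (map snd (filter P lay)) x)"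
  using assms
proof (induction lay arbitrary: x E)
  case Nil
  then show ?case by (auto intro: supp_mono)
next
  case (Cons g gs)
  have dis: "ldisj gs" "\<forall>h\<in>set gs. fst g \<inter> fst h = {}" using ldisj_Cons[OF Cons.prems(2)] by auto
  have gp: "GP N d g" using Cons.prems(1) by simp
  have ggp: "\<forall>h\<in>set gs. GP N d h" using Cons.prems(1) by simp
  show ?case
  proof (cases "P g")
    case False
    then show ?thesis using Cons.IH[where x=x and E=E] Cons.prems dis by auto
  next
    case True
    show ?thesis
    proof (cases "fst g \<inter> S = {}")
      case True
      have "op_eq N d (conj N d (snd g) x) x"
        using Cons.prems gp True unfolding GP_def by (intro conj_disj[where S="S \<union> E" and T="fst g"]) auto
      then have s: "supported_on N d (S \<union> E) (conj N d (snd g) x)"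
        using Cons.prems(3) op_eq_sym supp_cong by blast
      show ?thesis using Cons.IH[OF ggp dis(1) s] Cons.prems \<open>P g\<close> by auto
    next
      case False
      have s: "supported_on N d (S \<union> (E \<union> fst g)) (conj N d (snd g) x)"
        using conj_supp[OF Cons.prems(3), where T="fst g" and G="snd g"] gp Cons.prems(4) unfolding GP_def
        by (simp add: Un_assoc)
      have "fst g \<subseteq> F" using Cons.prems(7) \<open>P g\<close> False by auto
      have d2: "\<forall>h\<in>set gs. fst h \<inter> (E \<union> fst g) = {}" using dis(2) Cons.prems(5) by auto
      have "supported_on N d F (conjL N d (map snd (filter P gs)) (conj N d (snd g) x))"
        using Cons.prems gp \<open>fst g \<subseteq> F\<close> unfolding GP_def by (intro Cons.IH[OF ggp dis(1) s _ d2]) auto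
      then show ?thesis using \<open>P g\<close> by simp
    qed
  qed
qed

lemma layer_eq:
  assumes "\<forall>g\<in>set lay. GP N d g" "ldisj lay" "supported_on N d (S \<union> E) x" "S \<union> E \<subseteq> {..<N}"
    "\<forall>g\<in>set lay. fst g \<inter> E = {}" "\<forall>g\<in>set lay. \<not> P g \<longrightarrow> fst g \<inter> S = {}"
  shows "op_eq N d (conjL N d (map snd lay) x) (conjL N d (map snd (filter P lay)) x)"
  using assms
proof (induction lay arbitrary: x E)
  case Nil
  then show ?case by (simp add: op_eq_refl)
next
  case (Cons g gs)
  have dis: "ldisj gs" "\<forall>h\<in>set gs. fst g \<inter> fst h = {}" using ldisj_Cons[OF Cons.prems(2)] by auto
  have gp: "GP N d g" using Cons.prems(1) by simp
  have ggp: "\<forall>h\<in>set gs. GP N d h" using Cons.prems(1) by simp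
  show ?case
  proof (cases "fst g \<inter> S = {}")
    case True
    have c: "op_eq N d (conj N d (snd g) x) x"
      using Cons.prems gp True unfolding GP_def by (intro conj_disj[where S="S \<union> E" and T="fst g"]) auto
    then have s: "supported_on N d (S \<union> E) (conj N d (snd g) x)"
      using Cons.prems(3) op_eq_sym supp_cong by blast
    have ih: "op_eq N d (conjL N d (map snd gs) (conj N d (snd g) x)) (conjL N d (map snd (filter P gs)) (conj N d (snd g) x))"
      using Cons.IH[OF ggp dis(1) s] Cons.prems by auto
    show ?thesis
    proof (cases "P g")
      case True
      then show ?thesis using ih by simp
    next
      case False
      have "op_eq N d (conjL N d (map snd (g # gs)) x) (conjL N d (map snd (filter P gs)) (conj N d (snd g) x))"
        using ih by simp
      also have "op_eq N d \<dots> (conjL N d (map snd (filter P gs)) x)" by (rule conjL_cong[OF c])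
      finally show ?thesis using False by simp
    qed
  next
    case False
    then have "P g" using Cons.prems(6) by auto
    have s: "supported_on N d (S \<union> (E \<union> fst g)) (conj N d (snd g) x)"
      using conj_supp[OF Cons.prems(3), where T="fst g" and G="snd g"] gp Cons.prems(4) unfolding GP_def
      by (simp add: Un_assoc)
    have d2: "\<forall>h\<in>set gs. fst h \<inter> (E \<union> fst g) = {}" using dis(2) Cons.prems(5) by auto
    have "op_eq N d (conjL N d (map snd gs) (conj N d (snd g) x)) (conjL N d (map snd (filter P gs)) (conj N d (snd g) x))"
      using Cons.prems gp unfolding GP_def by (intro Cons.IH[OF ggp dis(1) s _ d2]) auto
    then show ?thesis using \<open>P g\<close> by simp
  qed
qed

definition layers_ok :: "nat \<Rightarrow> nat \<Rightarrow> (nat set \<times> op) list list \<Rightarrow> bool" where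
  "layers_ok N d ls \<longleftrightarrow> (\<forall>lay\<in>set ls. (\<forall>g\<in>set lay. GP N d g) \<and> ldisj lay)"

lemma multi_supp:
  assumes "layers_ok N d ls" "\<And>j. F j \<subseteq> {..<N}" "\<And>j. F j \<subseteq> F (Suc j)"
    "\<And>j. \<forall>lay\<in>set ls. \<forall>g\<in>set lay. P g \<longrightarrow> fst g \<inter> F j \<noteq> {} \<longrightarrow> fst g \<subseteq> F (Suc j)"
    "supported_on N d (F k) x"
  shows "supported_on N d (F (k + length ls)) (conjLL N d (map (filter P) ls) x)"
  using assms(1,4,5)
proof (induction ls arbitrary: k x)
  case Nil
  then show ?case by simp
next
  case (Cons l ls)
  have s: "supported_on N d (F (Suc k)) (conjL N d (map snd (filter P l)) x)"
    using Cons.prems assms(2,3) unfolding layers_ok_def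
    by (intro layer_supp[where S = "F k" and E = "{}"]) auto
  have "supported_on N d (F (Suc k + length ls)) (conjLL N d (map (filter P) ls) (conjL N d (map snd (filter P l)) x))"
    using Cons.IH[OF _ _ s] Cons.prems unfolding layers_ok_def by auto
  then show ?case by simp
qed

lemma multi_eq:
  assumes "layers_ok N d ls" "\<And>j. I j \<subseteq> {..<N}" "\<And>j. I j \<subseteq> I (Suc j)"
    "\<And>j. k \<le> j \<Longrightarrow> j < k + length ls \<Longrightarrow> \<forall>lay\<in>set ls. \<forall>g\<in>set lay.
        (fst g \<inter> I j \<noteq> {} \<longrightarrow> fst g \<subseteq> I (Suc j)) \<and> (\<not> P g \<longrightarrow> fst g \<inter> I j = {})"
    "supported_on N d (I k) x"
  shows "op_eq N d (conjLL N d ls x) (conjLL N d (map (filter P) ls) x)"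
  using assms(1,4,5)
proof (induction ls arbitrary: k x)
  case Nil
  then show ?case by (simp add: op_eq_refl)
next
  case (Cons l ls)
  have lok: "\<forall>g\<in>set l. GP N d g" "ldisj l" using Cons.prems(1) unfolding layers_ok_def by auto
  have h: "\<forall>g\<in>set l. (fst g \<inter> I k \<noteq> {} \<longrightarrow> fst g \<subseteq> I (Suc k)) \<and> (\<not> P g \<longrightarrow> fst g \<inter> I k = {})"
    using Cons.prems(2)[of k] by simp
  have e1: "op_eq N d (conjL N d (map snd l) x) (conjL N d (map snd (filter P l)) x)"
    using lok Cons.prems(3) assms(2) h by (intro layer_eq[where S = "I k" and E = "{}"]) auto
  have s1: "supported_on N d (I (Suc k)) (conjL N d (map snd (filter (\<lambda>_. True) l)) x)"
    using lok Cons.prems(3) assms(2,3) h by (intro layer_supp[where S = "I k" and E = "{}"]) auto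
  have ih: "op_eq N d (conjLL N d ls (conjL N d (map snd l) x)) (conjLL N d (map (filter P) ls) (conjL N d (map snd l) x))"
  proof (rule Cons.IH[of "Suc k"])
    show "layers_ok N d ls" using Cons.prems(1) unfolding layers_ok_def by simp
    show "supported_on N d (I (Suc k)) (conjL N d (map snd l) x)" using s1 by simp
    fix j assume "Suc k \<le> j" "j < Suc k + length ls"
    then show "\<forall>lay\<in>set ls. \<forall>g\<in>set lay. (fst g \<inter> I j \<noteq> {} \<longrightarrow> fst g \<subseteq> I (Suc j)) \<and> (\<not> P g \<longrightarrow> fst g \<inter> I j = {})"
      using Cons.prems(2)[of j] by simp
  qed
  have "op_eq N d (conjLL N d (l # ls) x) (conjLL N d (map (filter P) ls) (conjL N d (map snd l) x))"
    using ih by simp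
  also have "op_eq N d \<dots> (conjLL N d (map (filter P) ls) (conjL N d (map snd (filter P l)) x))"
    by (rule conjLL_cong[OF e1])
  finally show ?case by simp
qed



definition unit :: "nat \<Rightarrow> nat set \<Rightarrow> (nat \<Rightarrow> nat) \<Rightarrow> (nat \<Rightarrow> nat) \<Rightarrow> op" where
  "unit N S p q = (\<lambda>a b. if agree_off N S a b \<and> (\<forall>i\<in>S. a i = p i \<and> b i = q i) then 1 else 0)"

lemma rs_cf: "S \<subseteq> {..<N} \<Longrightarrow> b \<in> cfgs N d \<Longrightarrow> rs S b \<in> cf d S"
  unfolding rs_def cf_def cfgs_def by auto

lemma mrg_rs_self: "mrg S (rs S b) b = b"
  unfolding mrg_def rs_def by auto

lemma mul_unit_right:
  assumes "S \<subseteq> {..<N}" "p \<in> cf d S" "a \<in> cfgs N d" "b \<in> cfgs N d"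
  shows "op_mul N d Y (unit N S p q) a b = (if \<forall>i\<in>S. b i = q i then Y a (mrg S p b) else 0)"
proof (cases "\<forall>i\<in>S. b i = q i")
  case False
  then show ?thesis unfolding op_mul_def unit_def by (auto intro!: sum.neutral)
next
  case True
  have m: "mrg S p b \<in> cfgs N d" by (rule mrg_cfgs[OF assms(2,1,4)])
  have "op_mul N d Y (unit N S p q) a b = Y a (mrg S p b) * unit N S p q (mrg S p b) b"
    unfolding op_mul_def
  proof (rule sum_single[OF finite_cfgs m])
    fix e assume e: "e \<in> cfgs N d" "e \<noteq> mrg S p b"
    have "\<not> (agree_off N S e b \<and> (\<forall>i\<in>S. e i = p i))"
    proof
      assume h: "agree_off N S e b \<and> (\<forall>i\<in>S. e i = p i)"
      have "e = mrg S p b"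
      proof
        fix i show "e i = mrg S p b i"
        proof (cases "i < N")
          case True then show ?thesis using h unfolding agree_off_def mrg_def by auto
        next
          case False then show ?thesis using e(1) assms(1,4) unfolding cfgs_def mrg_def by auto
        qed
      qed
      then show False using e by simp
    qed
    then show "Y a e * unit N S p q e b = 0" unfolding unit_def by auto
  qed
  also have "\<dots> = Y a (mrg S p b)"
    using True unfolding unit_def agree_off_def mrg_def by auto
  finally show ?thesis using True by simp
qed

lemma mul_unit_left:
  assumes "S \<subseteq> {..<N}" "q \<in> cf d S" "a \<in> cfgs N d" "b \<in> cfgs N d"
  shows "op_mul N d (unit N S p q) Y a b = (if \<forall>i\<in>S. a i = p i then Y (mrg S q a) b else 0)"
proof (cases "\<forall>i\<in>S. a i = p i")
  case False
  then show ?thesis unfolding op_mul_def unit_def by (auto intro!: sum.neutral)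
next
  case True
  have m: "mrg S q a \<in> cfgs N d" by (rule mrg_cfgs[OF assms(2,1,3)])
  have "op_mul N d (unit N S p q) Y a b = unit N S p q a (mrg S q a) * Y (mrg S q a) b"
    unfolding op_mul_def
  proof (rule sum_single[OF finite_cfgs m])
    fix e assume e: "e \<in> cfgs N d" "e \<noteq> mrg S q a"
    have "\<not> (agree_off N S a e \<and> (\<forall>i\<in>S. e i = q i))"
    proof
      assume h: "agree_off N S a e \<and> (\<forall>i\<in>S. e i = q i)"
      have "e = mrg S q a"
      proof
        fix i show "e i = mrg S q a i"
        proof (cases "i < N")
          case True then show ?thesis using h unfolding agree_off_def mrg_def by auto
        next
          case False then show ?thesis using e(1) assms(1,3) unfolding cfgs_def mrg_def by auto
        qed
      qed
      then show False using e by simp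
    qed
    then show "unit N S p q a e * Y e b = 0" unfolding unit_def by auto
  qed
  also have "\<dots> = Y (mrg S q a) b"
    using True unfolding unit_def agree_off_def mrg_def by auto
  finally show ?thesis using True by simp
qed

lemma commutant:
  assumes "S1 \<inter> S2 = {}" "S1 \<union> S2 \<subseteq> {..<N}" "supported_on N d (S1 \<union> S2) Y" "d \<ge> 1"
    "\<forall>p\<in>cf d S1. \<forall>q\<in>cf d S1. op_eq N d (op_mul N d Y (unit N S1 p q)) (op_mul N d (unit N S1 p q) Y)"
  shows "supported_on N d S2 Y"
proof -
  have S1: "S1 \<subseteq> {..<N}" using assms(2) by auto
  have key: "(if \<forall>i\<in>S1. b i = q i then Y a (mrg S1 p b) else 0) = (if \<forall>i\<in>S1. a i = p i then Y (mrg S1 q a) b else 0)"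
    if "a \<in> cfgs N d" "b \<in> cfgs N d" "p \<in> cf d S1" "q \<in> cf d S1" for a b p q
  proof -
    have "op_mul N d Y (unit N S1 p q) a b = op_mul N d (unit N S1 p q) Y a b"
      using assms(5) that unfolding op_eq_def by blast
    then show ?thesis by (simp only: mul_unit_right[OF S1 that(3,1,2)] mul_unit_left[OF S1 that(4,1,2)])
  qed
  have F1: "Y a b = 0" if ab: "a \<in> cfgs N d" "b \<in> cfgs N d" and ne: "\<not> (\<forall>i\<in>S1. a i = b i)" for a b
  proof -
    have r: "rs S1 b \<in> cf d S1" by (rule rs_cf[OF S1 ab(2)])
    have "\<not> (\<forall>i\<in>S1. a i = rs S1 b i)" using ne unfolding rs_def by auto
    moreover have "\<forall>i\<in>S1. b i = rs S1 b i" unfolding rs_def by auto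
    ultimately show ?thesis using key[OF ab r r] by (simp only: mrg_rs_self if_True if_False) simp
  qed
  define z :: "nat \<Rightarrow> nat" where "z = (\<lambda>_. 0)"
  have z: "z \<in> cf d S1" using assms(4) unfolding z_def cf_def by auto
  have F2: "Y a b = Y (mrg S1 z a) (mrg S1 z b)" if ab: "a \<in> cfgs N d" "b \<in> cfgs N d" and eq: "\<forall>i\<in>S1. a i = b i" for a b
  proof -
    have r: "rs S1 b \<in> cf d S1" by (rule rs_cf[OF S1 ab(2)])
    have b2: "mrg S1 z b \<in> cfgs N d" by (rule mrg_cfgs[OF z S1 ab(2)])
    have 1: "\<forall>i\<in>S1. mrg S1 z b i = z i" unfolding mrg_def by auto
    have 2: "mrg S1 (rs S1 b) (mrg S1 z b) = b" unfolding mrg_def rs_def by auto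
    have 3: "\<forall>i\<in>S1. a i = rs S1 b i" using eq unfolding rs_def by auto
    show ?thesis using key[OF ab(1) b2 r z] 1 2 3 by simp
  qed
  obtain A where A: "\<And>c c'. c \<in> cfgs N d \<Longrightarrow> c' \<in> cfgs N d \<Longrightarrow>
     Y c c' = (if agree_off N (S1 \<union> S2) c c' then A (rs (S1 \<union> S2) c) (rs (S1 \<union> S2) c') else 0)"
    using suppE[OF assms(3)] by blast
  show ?thesis unfolding supp_def'
  proof (rule exI[of _ "\<lambda>s s'. Y s s'"], intro ballI)
    fix a b assume ab: "a \<in> cfgs N d" "b \<in> cfgs N d"
    show "Y a b = (if agree_off N S2 a b then Y (rs S2 a) (rs S2 b) else 0)"
    proof (cases "agree_off N S2 a b")
      case False
      then obtain i where i: "i < N" "i \<notin> S2" "a i \<noteq> b i" unfolding agree_off_def by auto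
      show ?thesis
      proof (cases "i \<in> S1")
        case True
        then show ?thesis using F1[OF ab] i False by auto
      next
        case False
        then have "\<not> agree_off N (S1 \<union> S2) a b" using i unfolding agree_off_def by auto
        then show ?thesis using A[OF ab] \<open>\<not> agree_off N S2 a b\<close> by simp
      qed
    next
      case True
      have eq: "\<forall>i\<in>S1. a i = b i" using True assms(1) S1 unfolding agree_off_def by auto
      have m: "mrg S1 z a \<in> cfgs N d" "mrg S1 z b \<in> cfgs N d"
        using mrg_cfgs[OF z S1] ab by auto
      have r: "rs S2 a \<in> cfgs N d" "rs S2 b \<in> cfgs N d"
        using ab unfolding rs_def cfgs_def by auto
      have ag1: "agree_off N (S1 \<union> S2) (mrg S1 z a) (mrg S1 z b)"
        using True unfolding agree_off_def mrg_def by auto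
      have ag2: "agree_off N (S1 \<union> S2) (rs S2 a) (rs S2 b)"
        unfolding agree_off_def rs_def by auto
      have e1: "rs (S1 \<union> S2) (mrg S1 z a) = rs (S1 \<union> S2) (rs S2 a)"
        "rs (S1 \<union> S2) (mrg S1 z b) = rs (S1 \<union> S2) (rs S2 b)"
        using assms(1) unfolding rs_def mrg_def z_def by (auto intro!: ext)
      have "Y a b = Y (mrg S1 z a) (mrg S1 z b)" by (rule F2[OF ab eq])
      also have "\<dots> = Y (rs S2 a) (rs S2 b)"
        unfolding A[OF m] A[OF r] using ag1 ag2 e1 by simp
      finally show ?thesis using True by simp
    qed
  qed
qed

definition tr :: "nat \<Rightarrow> nat \<Rightarrow> op \<Rightarrow> complex" where
  "tr N d X = (\<Sum>a\<in>cfgs N d. X a a)"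

lemma tr_cong: "op_eq N d X X' \<Longrightarrow> tr N d X = tr N d X'"
  unfolding tr_def op_eq_def by simp

lemma tr_comm: "tr N d (op_mul N d A B) = tr N d (op_mul N d B A)"
  unfolding tr_def op_mul_def by (subst sum.swap) (simp add: mult.commute)

lemma tr_conj:
  assumes "op_unitary N d V"
  shows "tr N d (conj N d V x) = tr N d x"
proof -
  have "tr N d (conj N d V x) = tr N d (op_mul N d (op_mul N d x V) (op_adj V))"
    unfolding conj_def by (rule tr_comm)
  also have "\<dots> = tr N d (op_mul N d x (op_mul N d V (op_adj V)))" by (simp add: mul_assoc)
  also have "\<dots> = tr N d (op_mul N d x op_id)"
    using assms unfolding op_unitary_def by (intro tr_cong mul_cong op_eq_refl) auto
  also have "\<dots> = tr N d x" by (intro tr_cong mul_id_right)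
  finally show ?thesis .
qed

lemma conj_hom:
  assumes "op_unitary N d V"
  shows "op_eq N d (op_mul N d (conj N d V x) (conj N d V z)) (conj N d V (op_mul N d x z))"
proof -
  have "op_mul N d (conj N d V x) (conj N d V z) =
    op_mul N d (op_adj V) (op_mul N d x (op_mul N d (op_mul N d V (op_adj V)) (op_mul N d z V)))"
    unfolding conj_def by (simp add: mul_assoc)
  also have "op_eq N d \<dots> (op_mul N d (op_adj V) (op_mul N d x (op_mul N d op_id (op_mul N d z V))))"
    using assms unfolding op_unitary_def by (intro mul_cong op_eq_refl) auto
  also have "op_eq N d \<dots> (op_mul N d (op_adj V) (op_mul N d x (op_mul N d z V)))"
    by (intro mul_cong op_eq_refl mul_id_left)
  also have "\<dots> = conj N d V (op_mul N d x z)" unfolding conj_def by (simp add: mul_assoc)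
  finally show ?thesis .
qed

lemma conj_adj: "op_adj (conj N d V x) = conj N d V (op_adj x)"
  unfolding conj_def adj_mul adj_adj mul_assoc ..

lemma proj_trace_bound:
  assumes "op_eq N d Y (op_mul N d (op_adj Y) Y)" "supported_on N d S2 Y" "S2 \<subseteq> {..<N}"
    "Re (tr N d Y) > 0"
  shows "Re (tr N d Y) \<ge> real (card (cf d ({..<N} - S2)))"
proof -
  define C where "C = cfgs N d"
  have fC: "finite C" unfolding C_def by (rule finite_cfgs)
  have Yab: "Y a b = (\<Sum>e\<in>C. cnj (Y e a) * Y e b)" if "a \<in> C" "b \<in> C" for a b
  proof -
    have "Y a b = op_mul N d (op_adj Y) Y a b" using assms(1) that unfolding op_eq_def C_def by blast
    then show ?thesis by (simp add: op_mul_def op_adj_def C_def)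
  qed
  have Yaa: "Re (Y a a) = (\<Sum>e\<in>C. (cmod (Y e a))\<^sup>2)" if "a \<in> C" for a
  proof -
    have "Re (Y a a) = (\<Sum>e\<in>C. Re (cnj (Y e a) * Y e a))" by (subst Yab[OF that that]) simp
    also have "\<dots> = (\<Sum>e\<in>C. (cmod (Y e a))\<^sup>2)"
      by (intro sum.cong refl) (simp add: cmod_power2 flip: power2_eq_square)
    finally show ?thesis .
  qed
  have CS: "(cmod (Y a b))\<^sup>2 \<le> Re (Y a a) * Re (Y b b)" if ab: "a \<in> C" "b \<in> C" for a b
  proof -
    have "cmod (Y a b) \<le> (\<Sum>e\<in>C. cmod (cnj (Y e a) * Y e b))"
      unfolding Yab[OF ab] by (rule norm_sum)
    also have "\<dots> = (\<Sum>e\<in>C. \<bar>cmod (Y e a)\<bar> * \<bar>cmod (Y e b)\<bar>)" by (simp add: norm_mult)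
    also have "\<dots> \<le> L2_set (\<lambda>e. cmod (Y e a)) C * L2_set (\<lambda>e. cmod (Y e b)) C"
      by (rule L2_set_mult_ineq)
    also have "\<dots> = sqrt (Re (Y a a)) * sqrt (Re (Y b b))"
      unfolding L2_set_def Yaa[OF ab(1)] Yaa[OF ab(2)] ..
    finally have 1: "cmod (Y a b) \<le> sqrt (Re (Y a a)) * sqrt (Re (Y b b))" .
    have nn: "Re (Y a a) \<ge> 0" "Re (Y b b) \<ge> 0" using Yaa ab by (auto intro: sum_nonneg)
    have "(cmod (Y a b))\<^sup>2 \<le> (sqrt (Re (Y a a)) * sqrt (Re (Y b b)))\<^sup>2"
      using 1 by (intro power_mono) auto
    also have "\<dots> = Re (Y a a) * Re (Y b b)" using nn by (simp add: power_mult_distrib)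
    finally show ?thesis .
  qed
  have trRe: "Re (tr N d Y) = (\<Sum>a\<in>C. Re (Y a a))" unfolding tr_def C_def by simp
  have "\<exists>j\<in>C. Re (Y j j) > 0"
  proof (rule ccontr)
    assume "\<not> (\<exists>j\<in>C. Re (Y j j) > 0)"
    then have "\<forall>a\<in>C. Re (Y a a) \<le> 0" by (simp add: not_less)
    then have "(\<Sum>a\<in>C. Re (Y a a)) \<le> 0" by (intro sum_nonpos) simp
    then show False using assms(4) trRe by simp
  qed
  then obtain j where j: "j \<in> C" "Re (Y j j) > 0" by blast
  obtain A where A: "\<And>c c'. c \<in> cfgs N d \<Longrightarrow> c' \<in> cfgs N d \<Longrightarrow>
     Y c c' = (if agree_off N S2 c c' then A (rs S2 c) (rs S2 c') else 0)"
    using suppE[OF assms(2)] by blast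
  define \<sigma> where "\<sigma> = (\<Sum>e\<in>C. if agree_off N S2 j e then Re (Y e e) else 0)"
  have "Re (Y j j) = (\<Sum>e\<in>C. if agree_off N S2 j e then (cmod (Y e j))\<^sup>2 else 0)"
    unfolding Yaa[OF j(1)]
  proof (intro sum.cong refl)
    fix e assume e: "e \<in> C"
    show "(cmod (Y e j))\<^sup>2 = (if agree_off N S2 j e then (cmod (Y e j))\<^sup>2 else 0)"
    proof (cases "agree_off N S2 j e")
      case False
      then have "\<not> agree_off N S2 e j" using agree_sym by blast
      then have "Y e j = 0" using A[of e j] e j(1) unfolding C_def by simp
      then show ?thesis by simp
    qed simp
  qed
  also have "\<dots> \<le> (\<Sum>e\<in>C. if agree_off N S2 j e then Re (Y e e) * Re (Y j j) else 0)"
  proof (rule sum_mono)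
    fix e assume e: "e \<in> C"
    show "(if agree_off N S2 j e then (cmod (Y e j))\<^sup>2 else 0) \<le> (if agree_off N S2 j e then Re (Y e e) * Re (Y j j) else 0)"
      using CS[OF e j(1)] by simp
  qed
  also have "\<dots> = \<sigma> * Re (Y j j)" unfolding \<sigma>_def sum_distrib_right by (intro sum.cong) auto
  finally have "1 \<le> \<sigma>" using j(2) by simp
  have s1: "\<sigma> = (\<Sum>s\<in>cf d S2. Re (A s s))"
  proof -
    have "\<sigma> = (\<Sum>s\<in>cf d S2. Re (Y (mrg S2 s j) (mrg S2 s j)))"
      unfolding \<sigma>_def C_def using collapse_sum[OF assms(3), of j d "\<lambda>e. Re (Y e e)"] j(1) C_def by simp
    also have "\<dots> = (\<Sum>s\<in>cf d S2. Re (A s s))"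
      using j(1) assms(3) unfolding C_def
      by (intro sum.cong refl) (simp add: A mrg_cfgs rs_mrg agree_off_def)
    finally show ?thesis .
  qed
  have s2: "Re (tr N d Y) = real (card (cf d ({..<N} - S2))) * (\<Sum>s\<in>cf d S2. Re (A s s))"
  proof -
    have "Re (tr N d Y) = (\<Sum>s\<in>cf d S2. \<Sum>t\<in>cf d ({..<N} - S2). Re (Y (mrg S2 s t) (mrg S2 s t)))"
      unfolding trRe C_def by (rule split_sum[OF assms(3)])
    also have "\<dots> = (\<Sum>s\<in>cf d S2. \<Sum>t\<in>cf d ({..<N} - S2). Re (A s s))"
    proof (intro sum.cong refl)
      fix s t assume st: "s \<in> cf d S2" "t \<in> cf d ({..<N} - S2)"
      have "mrg S2 s t \<in> cfgs N d" using st assms(3) unfolding cf_def cfgs_def mrg_def by auto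
      then show "Re (Y (mrg S2 s t) (mrg S2 s t)) = Re (A s s)"
        using st(1) by (simp add: A rs_mrg agree_off_def)
    qed
    also have "\<dots> = real (card (cf d ({..<N} - S2))) * (\<Sum>s\<in>cf d S2. Re (A s s))"
      by (simp add: sum_distrib_left)
    finally show ?thesis .
  qed
  show ?thesis using s1 s2 \<open>1 \<le> \<sigma>\<close>
    by (metis mult.right_neutral mult_left_mono of_nat_0_le_iff)
qed

lemma shift_site_lt: "i < N \<Longrightarrow> shift_site N i = (if i + 1 < N then i + 1 else 0)"
proof -
  assume i: "i < N"
  show ?thesis
  proof (cases "i + 1 < N")
    case True then show ?thesis using i unfolding shift_site_def by simp
  next
    case False then have "i + 1 = N" using i by simp
    then show ?thesis using i unfolding shift_site_def by simp
  qed
qed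

lemma shift_unit:
  assumes "hi < N" "lo \<le> hi"
  shows "op_eq N d (shift_qca N (unit N {i. lo \<le> i \<and> i < hi} (\<lambda>i. p (i + 1)) (\<lambda>i. q (i + 1))))
                   (unit N {i. Suc lo \<le> i \<and> i < Suc hi} p q)"
  unfolding op_eq_def
proof (intro ballI)
  fix a b assume ab: "a \<in> cfgs N d" "b \<in> cfgs N d"
  define W where "W = {i. lo \<le> i \<and> i < hi}"
  define S1 where "S1 = {i. Suc lo \<le> i \<and> i < Suc hi}"
  have c1: "(\<forall>i\<in>W. a (shift_site N i) = p (i + 1) \<and> b (shift_site N i) = q (i + 1))
      \<longleftrightarrow> (\<forall>j\<in>S1. a j = p j \<and> b j = q j)"
  proof
    assume h: "\<forall>i\<in>W. a (shift_site N i) = p (i + 1) \<and> b (shift_site N i) = q (i + 1)"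
    show "\<forall>j\<in>S1. a j = p j \<and> b j = q j"
    proof
      fix j assume j: "j \<in> S1"
      then have "j - 1 \<in> W" "j - 1 + 1 = j" unfolding W_def S1_def by auto
      moreover have "shift_site N (j - 1) = j" using j assms unfolding S1_def shift_site_def by auto
      ultimately show "a j = p j \<and> b j = q j" using h by metis
    qed
  next
    assume h: "\<forall>j\<in>S1. a j = p j \<and> b j = q j"
    show "\<forall>i\<in>W. a (shift_site N i) = p (i + 1) \<and> b (shift_site N i) = q (i + 1)"
    proof
      fix i assume i: "i \<in> W"
      then have "shift_site N i = i + 1" "i + 1 \<in> S1" using assms unfolding W_def S1_def shift_site_def by auto
      then show "a (shift_site N i) = p (i + 1) \<and> b (shift_site N i) = q (i + 1)" using h by auto
    qed
  qed
  have c2: "agree_off N W (a \<circ> shift_site N) (b \<circ> shift_site N) \<longleftrightarrow> agree_off N S1 a b"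
  proof
    assume h: "agree_off N W (a \<circ> shift_site N) (b \<circ> shift_site N)"
    show "agree_off N S1 a b" unfolding agree_off_def
    proof
      fix j assume j: "j \<in> {..<N} - S1"
      show "a j = b j"
      proof (cases "j = 0")
        case True
        have "N - 1 \<in> {..<N} - W" "shift_site N (N - 1) = 0" using assms unfolding W_def shift_site_def by auto
        then show ?thesis using h True unfolding agree_off_def by (metis comp_apply)
      next
        case False
        have "j - 1 \<in> {..<N} - W" "shift_site N (j - 1) = j" using j False assms unfolding W_def S1_def shift_site_def by auto
        then show ?thesis using h unfolding agree_off_def by (metis comp_apply)
      qed
    qed
  next
    assume h: "agree_off N S1 a b"
    show "agree_off N W (a \<circ> shift_site N) (b \<circ> shift_site N)" unfolding agree_off_def
    proof
      fix i assume i: "i \<in> {..<N} - W"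
      have "shift_site N i \<in> {..<N} - S1"
      proof (cases "i + 1 < N")
        case True then show ?thesis using i shift_site_lt[of i N] unfolding W_def S1_def by auto
      next
        case False then show ?thesis using i shift_site_lt[of i N] unfolding W_def S1_def by auto
      qed
      then show "(a \<circ> shift_site N) i = (b \<circ> shift_site N) i" using h unfolding agree_off_def by simp
    qed
  qed
  show "shift_qca N (unit N W (\<lambda>i. p (i + 1)) (\<lambda>i. q (i + 1))) a b = unit N S1 p q a b"
    unfolding shift_qca_def unit_def using c1 c2 by simp
qed




lemma supp_unit: "S \<subseteq> {..<N} \<Longrightarrow> supported_on N d S (unit N S p q)"
  unfolding supp_def'
proof (rule exI[of _ "\<lambda>s s'. if (\<forall>i\<in>S. s i = p i \<and> s' i = q i) then 1 else 0"], intro ballI)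
  fix c c' assume "S \<subseteq> {..<N}"
  have "(\<forall>i\<in>S. rs S c i = p i \<and> rs S c' i = q i) \<longleftrightarrow> (\<forall>i\<in>S. c i = p i \<and> c' i = q i)"
    unfolding rs_def by simp
  then show "unit N S p q c c' = (if agree_off N S c c' then (if (\<forall>i\<in>S. rs S c i = p i \<and> rs S c' i = q i) then 1 else 0) else 0)"
    unfolding unit_def by simp
qed



lemma adj_unit: "op_adj (unit N S p p) = unit N S p p"
  unfolding unit_def op_adj_def by (intro ext) (simp add: agree_sym conj_commute)

lemma unit_idem:
  assumes "S \<subseteq> {..<N}" "p \<in> cf d S"
  shows "op_eq N d (op_mul N d (unit N S p p) (unit N S p p)) (unit N S p p)"
  unfolding op_eq_def
proof (intro ballI)
  fix a b assume ab: "a \<in> cfgs N d" "b \<in> cfgs N d"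
  show "op_mul N d (unit N S p p) (unit N S p p) a b = unit N S p p a b"
  proof (cases "\<forall>i\<in>S. b i = p i")
    case True
    have "mrg S p b = b" using True unfolding mrg_def by auto
    then show ?thesis using True by (simp add: mul_unit_right[OF assms ab])
  next
    case False
    have "unit N S p p a b = 0" using False unfolding unit_def by auto
    then show ?thesis unfolding mul_unit_right[OF assms ab] if_not_P[OF False] by simp
  qed
qed

lemma tr_unit0:
  assumes "c \<le> N" "d > 0"
  shows "tr N d (unit N {i. c \<le> i \<and> i < N} (\<lambda>_. 0) (\<lambda>_. 0)) = of_nat (d ^ c)"
proof -
  have "tr N d (unit N {i. c \<le> i \<and> i < N} (\<lambda>_. 0) (\<lambda>_. 0)) =
      (\<Sum>a\<in>cfgs N d. if (\<forall>i. c \<le> i \<and> i < N \<longrightarrow> a i = 0) then 1 else 0)"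
    unfolding tr_def unit_def agree_off_def by (intro sum.cong refl) auto
  also have "\<dots> = of_nat (card {a\<in>cfgs N d. \<forall>i. c \<le> i \<and> i < N \<longrightarrow> a i = 0})"
    by (simp add: sum.inter_filter[symmetric] finite_cfgs)
  also have "{a\<in>cfgs N d. \<forall>i. c \<le> i \<and> i < N \<longrightarrow> a i = 0} = cf d {..<c}"
  proof (intro set_eqI iffI)
    fix a assume a: "a \<in> {a\<in>cfgs N d. \<forall>i. c \<le> i \<and> i < N \<longrightarrow> a i = 0}"
    show "a \<in> cf d {..<c}" unfolding cf_def
    proof (intro CollectI conjI allI ballI impI)
      fix i assume "i \<in> {..<c}" then show "a i < d" using a assms unfolding cfgs_def by auto
    next
      fix i assume i: "i \<notin> {..<c}"
      show "a i = 0"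
      proof (cases "i < N")
        case True then show ?thesis using a i by auto
      next
        case False then show ?thesis using a unfolding cfgs_def by auto
      qed
    qed
  next
    fix a assume a: "a \<in> cf d {..<c}"
    then show "a \<in> {a\<in>cfgs N d. \<forall>i. c \<le> i \<and> i < N \<longrightarrow> a i = 0}"
      using assms unfolding cf_def cfgs_def by (auto simp: not_less) (metis lessThan_iff not_less)
  qed
  also have "card (cf d {..<c}) = d ^ c" by (simp add: card_cf)
  finally show ?thesis .
qed


lemma gate_dist:
  assumes "valid_gate L N d R g" "L > 0" "i \<in> fst g" "j \<in> fst g"
  shows "real (min (ndist i j) (N - ndist i j)) \<le> max R 0 * real N / (pi * L)"
proof -
  have ij: "i < N" "j < N" using assms unfolding valid_gate_def by auto
  define m where "m = min (ndist i j) (N - ndist i j)"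
  have "rp3_dist L (site N i) (site N j) \<le> R" using assms unfolding valid_gate_def by auto
  then have "L * (pi * real m / real N) \<le> R"
    using rp3_dist_site[OF ij, of L] unfolding m_def by simp
  then have h: "L * (pi * real m / real N) \<le> max R 0" by linarith
  have N: "real N > 0" using ij by simp
  have "L * pi * real m \<le> max R 0 * real N" using h N by (simp add: field_simps)
  then have "real m * (pi * L) \<le> max R 0 * real N" by (simp add: algebra_simps)
  then show ?thesis unfolding m_def[symmetric] using assms(2) pi_gt_zero
    by (simp add: pos_le_divide_eq)
qed


lemma rem_aux:
  fixes i0 j0 k N r :: nat
  assumes "j0 + r < i0" "i0 < N" "k < N" "2 * r < N"
    "min (ndist i0 j0) (N - ndist i0 j0) \<le> r" "min (ndist k j0) (N - ndist k j0) \<le> r"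
  shows "k < 2 * r \<or> N - r \<le> k"
proof -
  have nd: "ndist i0 j0 = i0 - j0" using assms(1) unfolding ndist_def by auto
  have "N - (i0 - j0) \<le> r" using assms(5) assms(1) unfolding nd min_le_iff_disj by arith
  then have j0: "j0 < r" using assms(1,2) by arith
  show ?thesis
  proof (cases "j0 \<le> k")
    case True
    then have "ndist k j0 = k - j0" unfolding ndist_def by auto
    then show ?thesis using assms(6) j0 True unfolding min_le_iff_disj by arith
  next
    case False
    then have "ndist k j0 = j0 - k" unfolding ndist_def by auto
    then show ?thesis using assms(6) j0 False assms(3,4) unfolding min_le_iff_disj by arith
  qed
qed

lemma ndist_sym: "ndist i j = ndist j i"
  unfolding ndist_def by auto

lemma removed_geom:
  assumes "\<forall>i\<in>T. \<forall>j\<in>T. min (ndist i j) (N - ndist i j) \<le> r" "T \<subseteq> {..<N}" "2 * r < N"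
    "\<not> (\<forall>i\<in>T. \<forall>j\<in>T. i \<le> j + r \<and> j \<le> i + r)" "k \<in> T"
  shows "k < 2 * r \<or> N - r \<le> k"
proof -
  obtain i0 j0 where ij: "i0 \<in> T" "j0 \<in> T" "\<not> (i0 \<le> j0 + r \<and> j0 \<le> i0 + r)" using assms(4) by blast
  have lt: "i0 < N" "j0 < N" "k < N" using ij assms(2,5) by auto
  show ?thesis
  proof (cases "j0 + r < i0")
    case True
    show ?thesis by (rule rem_aux[OF True lt(1,3) assms(3)]) (use assms(1) ij assms(5) in auto)
  next
    case False
    then have "i0 + r < j0" using ij(3) by auto
    show ?thesis by (rule rem_aux[OF \<open>i0 + r < j0\<close> lt(2,3) assms(3)]) (use assms(1) ij assms(5) in auto)
  qed
qed


lemma kept_interval: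
  fixes T :: "nat set"
  assumes "T \<subseteq> {..<N}" "\<forall>i\<in>T. \<forall>j\<in>T. i \<le> j + r \<and> j \<le> i + r"
    "T \<inter> {i. lo \<le> i \<and> i < hi \<and> i < N} \<noteq> {}"
  shows "T \<subseteq> {i. lo - r \<le> i \<and> i < hi + r \<and> i < N}"
proof
  fix k assume k: "k \<in> T"
  obtain i where i: "i \<in> T" "lo \<le> i" "i < hi" using assms(3) by auto
  have "i \<le> k + r" "k \<le> i + r" using assms(2) i k by auto
  moreover have "k < N" using k assms(1) by auto
  moreover have "lo \<le> k + r" using i \<open>i \<le> k + r\<close> by linarith
  then have "lo - r \<le> k" by (simp add: le_diff_conv)
  moreover have "k < hi + r" using i \<open>k \<le> i + r\<close> by linarith
  ultimately show "k \<in> {i. lo - r \<le> i \<and> i < hi + r \<and> i < N}" by simp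
qed




theorem mainTheorem16:
  fixes d :: nat and L :: "nat \<Rightarrow> real" and N :: "nat \<Rightarrow> nat"
  assumes "d \<ge> 2"
    and "filterlim L at_top sequentially"
    and "\<And>n. N n \<ge> 2"
    and "\<exists>C. \<forall>n. pi * L n / real (N n) \<le> C"
  shows "\<not> (\<exists>D R. \<forall>n. fdqc_realizes (L n) (N n) d D R (shift_qca (N n)))"
proof
  assume "\<exists>D R. \<forall>n. fdqc_realizes (L n) (N n) d D R (shift_qca (N n))"
  then obtain D R where DR: "\<And>n. fdqc_realizes (L n) (N n) d D R (shift_qca (N n))" by blast
  obtain C where C: "\<And>n. pi * L n / real (N n) \<le> C" using assms(4) by blast
  define R' where "R' = max R 0"
  define K :: real where "K = 3 * real D + 3"
  define M where "M = max 1 (max (2 * K * R' / pi) ((2 * K + 4) * C / pi))"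
  have "eventually (\<lambda>n. L n \<ge> M) sequentially" using assms(2) by (simp add: filterlim_at_top)
  then obtain n where Ln: "L n \<ge> M" by (auto simp: eventually_sequentially)
  define Lr where "Lr = L n"
  define Nn where "Nn = N n"
  have R'0: "R' \<ge> 0" unfolding R'_def by simp
  have K0: "K > 0" unfolding K_def by simp
  have L1: "Lr \<ge> 1" using Ln unfolding Lr_def M_def by simp
  have Lpos: "Lr > 0" using L1 by simp
  have N2: "Nn \<ge> 2" unfolding Nn_def using assms(3) by simp
  have Npos: "real Nn > 0" using N2 by simp
  have CL: "pi * Lr / real Nn \<le> C" using C unfolding Lr_def Nn_def by simp
  have "pi * Lr / real Nn > 0" using Lpos Npos by simp
  then have Cpos: "C > 0" using CL by linarith
  have NnK: "real Nn \<ge> 2 * K + 4"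
  proof -
    have "(2 * K + 4) * C / pi \<le> Lr" using Ln unfolding Lr_def M_def by simp
    then have "(2 * K + 4) * C \<le> pi * Lr" by (simp add: divide_le_eq mult.commute)
    also have "\<dots> \<le> C * real Nn" using CL Npos by (simp add: divide_le_eq)
    finally have "(2 * K + 4) * C \<le> real Nn * C" by (simp add: mult.commute)
    then show ?thesis using Cpos by simp
  qed
  have KR: "2 * K * R' \<le> pi * Lr"
  proof -
    have "2 * K * R' / pi \<le> Lr" using Ln unfolding Lr_def M_def by simp
    then show ?thesis by (simp add: divide_le_eq mult.commute)
  qed
  define y where "y = R' * real Nn / (pi * Lr)"
  define r where "r = nat \<lceil>y\<rceil>"
  have y0: "y \<ge> 0" unfolding y_def using R'0 Lpos by simp
  have ry1: "y \<le> real r" unfolding r_def by linarith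
  have ry2: "real r < y + 1" unfolding r_def using y0 by linarith
  have Ky: "K * y \<le> real Nn / 2"
  proof -
    have "K * y = (K * R') * real Nn / (pi * Lr)" unfolding y_def by simp
    also have "\<dots> \<le> (pi * Lr / 2) * real Nn / (pi * Lr)"
      using KR Npos Lpos by (intro divide_right_mono mult_right_mono) auto
    also have "\<dots> = real Nn / 2" using Lpos by simp
    finally show ?thesis .
  qed
  have big: "3 * D * r + 3 * r + 2 \<le> Nn"
  proof -
    have "K * real r \<le> K * (y + 1)" using ry2 K0 by simp
    also have "\<dots> \<le> real Nn / 2 + K" using Ky by (simp add: algebra_simps)
    also have "\<dots> \<le> real Nn - 2" using NnK by simp
    finally have "real (3 * D * r + 3 * r + 2) \<le> real Nn" unfolding K_def by (simp add: algebra_simps)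
    then show ?thesis by linarith
  qed
  obtain layers where lenD: "length layers \<le> D"
    and vl: "\<forall>lay\<in>set layers. valid_layer Lr Nn d R lay"
    and realz: "\<And>X. op_eq Nn d (shift_qca Nn X) (conj Nn d (circuit_unitary Nn d layers) X)"
    using DR[of n] unfolding fdqc_realizes_def conj_def Lr_def[symmetric] Nn_def[symmetric] by blast
  define U where "U = circuit_unitary Nn d layers"
  have gates: "\<forall>lay\<in>set layers. \<forall>g\<in>set lay. valid_gate Lr Nn d R g"
    using vl unfolding valid_layer_def by blast
  have lok: "layers_ok Nn d layers"
    unfolding layers_ok_def
  proof (rule ballI, rule conjI)
    fix lay assume "lay \<in> set layers"
    then have v: "valid_layer Lr Nn d R lay" using vl by blast
    show "\<forall>g\<in>set lay. GP Nn d g" using v unfolding valid_layer_def valid_gate_def GP_def by simp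
    show "ldisj lay" using v unfolding valid_layer_def ldisj_def by simp
  qed
  have sub: "\<forall>lay\<in>set layers. \<forall>g\<in>set lay. fst g \<subseteq> {..<Nn}"
    using gates unfolding valid_gate_def by blast
  have ring: "\<forall>lay\<in>set layers. \<forall>g\<in>set lay. \<forall>i\<in>fst g. \<forall>j\<in>fst g. min (ndist i j) (Nn - ndist i j) \<le> r"
  proof (intro ballI)
    fix lay g i j assume h: "lay \<in> set layers" "g \<in> set lay" "i \<in> fst g" "j \<in> fst g"
    have "real (min (ndist i j) (Nn - ndist i j)) \<le> y"
      using gate_dist[of Lr Nn d R g i j] gates h Lpos unfolding y_def R'_def by auto
    then show "min (ndist i j) (Nn - ndist i j) \<le> r" using ry1 by linarith
  qed
  define keep where "keep = (\<lambda>g::nat set \<times> op. \<forall>i\<in>fst g. \<forall>j\<in>fst g. i \<le> j + r \<and> j \<le> i + r)"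
  have rem: "\<forall>lay\<in>set layers. \<forall>g\<in>set lay. \<not> keep g \<longrightarrow> (\<forall>k\<in>fst g. k < 2 * r \<or> Nn - r \<le> k)"
  proof (intro ballI impI)
    fix lay g k assume h: "lay \<in> set layers" "g \<in> set lay" "\<not> keep g" "k \<in> fst g"
    show "k < 2 * r \<or> Nn - r \<le> k"
    proof (rule removed_geom[of "fst g" Nn r k])
      show "\<forall>i\<in>fst g. \<forall>j\<in>fst g. min (ndist i j) (Nn - ndist i j) \<le> r" using ring h(1,2) by blast
      show "fst g \<subseteq> {..<Nn}" using sub h(1,2) by blast
      show "2 * r < Nn" using big by linarith
      show "\<not> (\<forall>i\<in>fst g. \<forall>j\<in>fst g. i \<le> j + r \<and> j \<le> i + r)" using h(3) unfolding keep_def .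
      show "k \<in> fst g" by (rule h(4))
    qed
  qed
  have kept: "\<And>lay g lo hi. lay \<in> set layers \<Longrightarrow> g \<in> set lay \<Longrightarrow> keep g \<Longrightarrow>
      fst g \<inter> {i. lo \<le> i \<and> i < hi \<and> i < Nn} \<noteq> {} \<Longrightarrow> fst g \<subseteq> {i. lo - r \<le> i \<and> i < hi + r \<and> i < Nn}"
  proof -
    fix lay g lo hi assume h: "lay \<in> set layers" "g \<in> set lay" "keep g"
      "fst g \<inter> {i. lo \<le> i \<and> i < hi \<and> i < Nn} \<noteq> {}"
    have "fst g \<subseteq> {..<Nn}" using sub h(1,2) by blast
    moreover have "\<forall>i\<in>fst g. \<forall>j\<in>fst g. i \<le> j + r \<and> j \<le> i + r" using h(3) unfolding keep_def .
    ultimately show "fst g \<subseteq> {i. lo - r \<le> i \<and> i < hi + r \<and> i < Nn}" using h(4) by (rule kept_interval)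
  qed
  define w where "w = D * r"
  define c where "c = 2 * w + 2 * r + 1"
  have big2: "3 * w + 3 * r + 2 \<le> Nn" using big unfolding w_def by simp
  define V where "V = circuit_unitary Nn d (map (filter keep) layers)"
  have Vu: "op_unitary Nn d V"
    unfolding V_def circuit_unitary_def
  proof (rule unitary_prod, intro ballI)
    fix W assume "W \<in> set (map (\<lambda>lay. op_prod Nn d (map snd lay)) (map (filter keep) layers))"
    then obtain lay where lay: "lay \<in> set layers" "W = op_prod Nn d (map snd (filter keep lay))" by auto
    show "op_unitary Nn d W" unfolding lay(2)
      by (rule unitary_prod) (use gates lay(1) in \<open>auto simp: valid_gate_def\<close>)
  qed
  have cN: "c + w + r + 1 \<le> Nn" using big2 unfolding c_def by simp
  have dpos: "d > 0" "d \<ge> 1" using assms(1) by auto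
  define S0 where "S0 = {i. c \<le> i \<and> i < Nn}"
  define z0 :: "nat \<Rightarrow> nat" where "z0 = (\<lambda>_. 0)"
  define x where "x = unit Nn S0 z0 z0"
  define Y where "Y = conj Nn d V x"
  define S1 where "S1 = {i. c - w \<le> i \<and> i < c + 1}"
  define S2 where "S2 = {i. c + 1 \<le> i \<and> i < Nn}"
  have S0N: "S0 \<subseteq> {..<Nn}" unfolding S0_def by auto
  have S2N: "S2 \<subseteq> {..<Nn}" unfolding S2_def by auto
  have S12: "S1 \<inter> S2 = {}" "S1 \<union> S2 \<subseteq> {..<Nn}" using cN unfolding S1_def S2_def by auto
  have xsupp: "supported_on Nn d S0 x" unfolding x_def by (rule supp_unit[OF S0N])
  define FA where "FA = (\<lambda>j. {i. c - j * r \<le> i \<and> i < Nn})"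
  have FAs: "FA j = {i. (c - j * r) \<le> i \<and> i < Nn \<and> i < Nn}" for j unfolding FA_def by auto
  have FAsuc: "c - j * r - r = c - Suc j * r" for j by (simp add: diff_diff_left add.commute)
  have "supported_on Nn d (FA (0 + length layers)) (conjLL Nn d (map (filter keep) layers) x)"
  proof (rule multi_supp[OF lok])
    show "FA j \<subseteq> {..<Nn}" for j unfolding FA_def by auto
    show "FA j \<subseteq> FA (Suc j)" for j
    proof -
      have "c - Suc j * r \<le> c - j * r" by (intro diff_le_mono2) simp
      then show ?thesis unfolding FA_def by auto
    qed
    show "\<forall>lay\<in>set layers. \<forall>g\<in>set lay. keep g \<longrightarrow> fst g \<inter> FA j \<noteq> {} \<longrightarrow> fst g \<subseteq> FA (Suc j)" for j
    proof (intro ballI impI)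
      fix lay g assume h: "lay \<in> set layers" "g \<in> set lay" "keep g" "fst g \<inter> FA j \<noteq> {}"
      have "fst g \<subseteq> {i. c - j * r - r \<le> i \<and> i < Nn + r \<and> i < Nn}"
        using kept[OF h(1-3)] h(4) unfolding FAs by blast
      then show "fst g \<subseteq> FA (Suc j)" unfolding FA_def FAsuc by auto
    qed
    show "supported_on Nn d (FA 0) x" using xsupp unfolding FA_def S0_def by simp
  qed
  moreover have "FA (0 + length layers) \<subseteq> S1 \<union> S2"
  proof -
    have "length layers * r \<le> w" unfolding w_def using lenD by simp
    then have "c - w \<le> c - length layers * r" by (rule diff_le_mono2)
    then show ?thesis unfolding FA_def S1_def S2_def by auto
  qed
  ultimately have "supported_on Nn d (S1 \<union> S2) (conjLL Nn d (map (filter keep) layers) x)"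
    by (rule supp_mono)
  moreover have "op_eq Nn d (conjLL Nn d (map (filter keep) layers) x) Y"
    unfolding Y_def V_def by (rule op_eq_sym[OF circ_conj])
  ultimately have YS: "supported_on Nn d (S1 \<union> S2) Y" by (rule supp_cong[rotated])
  define lo where "lo = w + 2 * r"
  define W where "W = {i. lo \<le> i \<and> i < c}"
  have SW: "S1 = {i. Suc lo \<le> i \<and> i < Suc c}" unfolding S1_def lo_def c_def by auto
  have WN: "W \<subseteq> {..<Nn}" using cN unfolding W_def by auto
  have S0W: "S0 \<inter> W = {}" unfolding S0_def W_def by auto
  define I where "I = (\<lambda>j. {i. lo - j * r \<le> i \<and> i < c + j * r \<and> i < Nn})"
  have Zc: "op_eq Nn d (conj Nn d V (unit Nn W (\<lambda>i. p (i + 1)) (\<lambda>i. q (i + 1)))) (unit Nn S1 p q)" for p q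
  proof -
    define z where "z = unit Nn W (\<lambda>i. p (i + 1)) (\<lambda>i. q (i + 1))"
    have zI: "supported_on Nn d (I 0) z"
    proof -
      have "I 0 = W" unfolding I_def W_def using cN by auto
      then show ?thesis unfolding z_def using supp_unit[OF WN] by simp
    qed
    have me: "op_eq Nn d (conjLL Nn d layers z) (conjLL Nn d (map (filter keep) layers) z)"
    proof (rule multi_eq[OF lok, where k = 0])
      show "I j \<subseteq> {..<Nn}" for j unfolding I_def by auto
      show "I j \<subseteq> I (Suc j)" for j
      proof -
        have "lo - Suc j * r \<le> lo - j * r" by (intro diff_le_mono2) simp
        then show ?thesis unfolding I_def by auto
      qed
      show "supported_on Nn d (I 0) z" by (rule zI)
      fix j assume j: "0 \<le> j" "j < 0 + length layers"
      have jr: "j * r \<le> w" unfolding w_def using j lenD by simp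
      show "\<forall>lay\<in>set layers. \<forall>g\<in>set lay. (fst g \<inter> I j \<noteq> {} \<longrightarrow> fst g \<subseteq> I (Suc j)) \<and> (\<not> keep g \<longrightarrow> fst g \<inter> I j = {})"
      proof (intro ballI)
        fix lay g assume h: "lay \<in> set layers" "g \<in> set lay"
        have disj: "fst g \<inter> I j = {}" if nk: "\<not> keep g"
        proof (rule ccontr)
          assume "fst g \<inter> I j \<noteq> {}"
          then obtain k where k: "k \<in> fst g" "lo - j * r \<le> k" "k < c + j * r" unfolding I_def by auto
          have "k < 2 * r \<or> Nn - r \<le> k" using rem h nk k(1) by blast
          moreover have "2 * r \<le> k" using k(2) jr unfolding lo_def by linarith
          moreover have "k + r < Nn" using k(3) jr cN by linarith
          ultimately show False by linarith
        qed
        have inc: "fst g \<inter> I j \<noteq> {} \<longrightarrow> fst g \<subseteq> I (Suc j)"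
        proof
          assume ne: "fst g \<inter> I j \<noteq> {}"
          then have kg: "keep g" using disj by blast
          have "fst g \<subseteq> {i. lo - j * r - r \<le> i \<and> i < c + j * r + r \<and> i < Nn}"
            using kept[OF h kg] ne unfolding I_def by blast
          moreover have "lo - j * r - r = lo - Suc j * r" by (simp add: diff_diff_left add.commute)
          ultimately show "fst g \<subseteq> I (Suc j)" unfolding I_def by (auto simp: add.commute)
        qed
        show "(fst g \<inter> I j \<noteq> {} \<longrightarrow> fst g \<subseteq> I (Suc j)) \<and> (\<not> keep g \<longrightarrow> fst g \<inter> I j = {})"
          using inc disj by blast
      qed
    qed
    have "op_eq Nn d (conj Nn d V z) (conjLL Nn d (map (filter keep) layers) z)"
      unfolding V_def by (rule circ_conj)
    also have "op_eq Nn d \<dots> (conjLL Nn d layers z)" by (rule op_eq_sym[OF me])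
    also have "op_eq Nn d \<dots> (conj Nn d U z)" unfolding U_def by (rule op_eq_sym[OF circ_conj])
    also have "op_eq Nn d \<dots> (shift_qca Nn z)" unfolding U_def by (rule op_eq_sym[OF realz])
    also have "op_eq Nn d \<dots> (unit Nn S1 p q)"
      unfolding z_def W_def SW using cN by (intro shift_unit) (auto simp: lo_def c_def)
    finally show ?thesis unfolding z_def .
  qed
  have comm: "\<forall>p\<in>cf d S1. \<forall>q\<in>cf d S1. op_eq Nn d (op_mul Nn d Y (unit Nn S1 p q)) (op_mul Nn d (unit Nn S1 p q) Y)"
  proof (intro ballI)
    fix p q :: "nat \<Rightarrow> nat"
    define z where "z = unit Nn W (\<lambda>i. p (i + 1)) (\<lambda>i. q (i + 1))"
    have zc: "op_eq Nn d (conj Nn d V z) (unit Nn S1 p q)" unfolding z_def by (rule Zc)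
    have zs: "supported_on Nn d W z" unfolding z_def by (rule supp_unit[OF WN])
    have xz: "op_eq Nn d (op_mul Nn d x z) (op_mul Nn d z x)"
      by (rule commute_disj[OF xsupp zs S0W S0N WN])
    have "op_eq Nn d (op_mul Nn d Y (unit Nn S1 p q)) (op_mul Nn d Y (conj Nn d V z))"
      by (rule mul_cong[OF op_eq_refl op_eq_sym[OF zc]])
    also have "op_eq Nn d \<dots> (conj Nn d V (op_mul Nn d x z))" unfolding Y_def by (rule conj_hom[OF Vu])
    also have "op_eq Nn d \<dots> (conj Nn d V (op_mul Nn d z x))" by (rule conj_cong[OF xz])
    also have "op_eq Nn d \<dots> (op_mul Nn d (conj Nn d V z) Y)" unfolding Y_def by (rule op_eq_sym[OF conj_hom[OF Vu]])
    also have "op_eq Nn d \<dots> (op_mul Nn d (unit Nn S1 p q) Y)" by (rule mul_cong[OF zc op_eq_refl])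
    finally show "op_eq Nn d (op_mul Nn d Y (unit Nn S1 p q)) (op_mul Nn d (unit Nn S1 p q) Y)" .
  qed
  have YS2: "supported_on Nn d S2 Y" by (rule commutant[OF S12 YS dpos(2) comm])
  have z0cf: "z0 \<in> cf d S0" unfolding z0_def cf_def using dpos by auto
  have adjY: "op_adj Y = Y" unfolding Y_def conj_adj x_def adj_unit ..
  have "op_eq Nn d (op_mul Nn d (op_adj Y) Y) (conj Nn d V (op_mul Nn d x x))"
    unfolding adjY unfolding Y_def by (rule conj_hom[OF Vu])
  also have "op_eq Nn d \<dots> Y" unfolding Y_def x_def by (rule conj_cong[OF unit_idem[OF S0N z0cf]])
  finally have Yproj: "op_eq Nn d Y (op_mul Nn d (op_adj Y) Y)" by (rule op_eq_sym)
  have cle: "c \<le> Nn" using cN by simp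
  have trY: "tr Nn d Y = of_nat (d ^ c)"
    unfolding Y_def tr_conj[OF Vu] x_def S0_def z0_def by (rule tr_unit0[OF cle dpos(1)])
  have pos: "Re (tr Nn d Y) > 0" unfolding trY using dpos by simp
  have "Re (tr Nn d Y) \<ge> real (card (cf d ({..<Nn} - S2)))"
    by (rule proj_trace_bound[OF Yproj YS2 S2N pos])
  moreover have "{..<Nn} - S2 = {..<c + 1}" unfolding S2_def using cN by auto
  ultimately have "real (d ^ (c + 1)) \<le> real (d ^ c)" unfolding trY by (simp add: card_cf)
  then have "d ^ (c + 1) \<le> d ^ c" by linarith
  moreover have "d ^ c < d ^ (c + 1)" using assms(1) by simp
  ultimately show False by simp
qed

end
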